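(* Let $A,B$ be commutative rings with identity, $f:A\to B$ a ring homomorphism and $J$ an ideal of $B$, regarded as an $A$-module via $f$. Then: (1) for every finitely generated ideal $\mathfrak b$ of $A$, $$\operatorname{Kgrade}_{A\bowtie^f J}(\mathfrak b^e,A\bowtie^f J)=\min\{\operatorname{Kgrade}_A(\mathfrak b,A),\operatorname{Kgrade}_A(\mathfrak b,J)\};$$ (2) for every ideal $\mathfrak a$ of $A$, $$\operatorname{Kgrade}_{A\bowtie^f J}(\mathfrak a^e,A\bowtie^f J)\le\min\{\operatorname{Kgrade}_A(\mathfrak a,A),\operatorname{Kgrade}_A(\mathfrak a,J)\}.$$
   Context: The amalgamation of $A$ with $B$ along $J$ with respect to $f$ is the subring $A\bowtie^fJ=\{(a,f(a)+j): a\in A,\ j\in J\}$ of $A\times B$. Let $\iota_A:A\to A\bowtie^fJ$, $\iota_A(x)=(x,f(x))$; for an ideal $\mathfrak a$ of $A$, $\mathfrak a^e$ denotes the ideal $\iota_A(\mathfrak a)(A\bowtie^fJ)$. Koszul grade: for a ring $R$, an $R$-module $M$ and a finitely generated ideal $\mathfrak b$ of $R$ generated by $x_1,\dots,x_\ell$, $\operatorname{Kgrade}_R(\mathfrak b,M)=\inf\{i\ge 0: H^i(\operatorname{Hom}_R(\mathbb K_\bullet(x_1,\dots,x_\ell),M))\neq 0\}$ (with $\inf\emptyset=\infty$), where $\mathbb K_\bullet$ is the Koszul complex; this is independent of the generators. For an arbitrary ideal $\mathfrak a$ of $R$, $\operatorname{Kgrade}_R(\mathfrak a,M)=\sup\{\operatorname{Kgrade}_R(\mathfrak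 b,M):\mathfrak b\subseteq\mathfrak a$ finitely generated ideal$\}$. *)

theory Defs
  imports "HOL-Algebra.Algebra" "HOL-Library.Extended_Nat"
begin

definition amalg :: "('a, 'c) ring_scheme \<Rightarrow> ('b, 'd) ring_scheme \<Rightarrow> ('a \<Rightarrow> 'b) \<Rightarrow> 'b set
    \<Rightarrow> ('a \<times> 'b) ring" where
  "amalg A B f J =
     \<lparr> carrier = {(a, f a \<oplus>\<^bsub>B\<^esub> j) | a j. a \<in> carrier A \<and> j \<in> J},
       monoid.mult = (\<lambda>x y. (fst x \<otimes>\<^bsub>A\<^esub> fst y, snd x \<otimes>\<^bsub>B\<^esub> snd y)),
       one = (\<one>\<^bsub>A\<^esub>, \<one>\<^bsub>B\<^esub>),
       ring.zero = (\<zero>\<^bsub>A\<^esub>, \<zero>\<^bsub>B\<^esub>),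
       add = (\<lambda>x y. (fst x \<oplus>\<^bsub>A\<^esub> fst y, snd x \<oplus>\<^bsub>B\<^esub> snd y)) \<rparr>"

definition ext_ideal :: "('a, 'c) ring_scheme \<Rightarrow> ('b, 'd) ring_scheme \<Rightarrow> ('a \<Rightarrow> 'b) \<Rightarrow> 'b set
    \<Rightarrow> 'a set \<Rightarrow> ('a \<times> 'b) set" where
  "ext_ideal A B f J \<aa> = genideal (amalg A B f J) ((\<lambda>x. (x, f x)) ` \<aa>)"

definition ring_module :: "('a, 'c) ring_scheme \<Rightarrow> ('a, 'a) module" where
  "ring_module R = \<lparr> carrier = carrier R, monoid.mult = monoid.mult R, one = \<one>\<^bsub>R\<^esub>,
     ring.zero = \<zero>\<^bsub>R\<^esub>, add = add R, smult = monoid.mult R \<rparr>"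

definition ideal_module :: "('a, 'c) ring_scheme \<Rightarrow> ('b, 'd) ring_scheme \<Rightarrow> ('a \<Rightarrow> 'b)
    \<Rightarrow> 'b set \<Rightarrow> ('a, 'b) module" where
  "ideal_module A B f J = \<lparr> carrier = J, monoid.mult = monoid.mult B, one = \<one>\<^bsub>B\<^esub>,
     ring.zero = \<zero>\<^bsub>B\<^esub>, add = add B, smult = (\<lambda>a j. f a \<otimes>\<^bsub>B\<^esub> j) \<rparr>"

text \<open>Hom_R(K_i, M) is identified with the M-valued functions on the i-element subsets
  S of {0..<l} (values on the basis vectors e_S of the exterior power).  The dual of the
  Koszul differential d(e_T) = sum_{k in T} (-1)^{#{j in T. j < k}} x_k e_{T - {k}} gives
  (d phi)(T) = sum_{k in T} (-1)^{#{j in T. j < k}} x_k phi(T - {k}).\<close>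
definition koszul_d :: "('r, 'c) ring_scheme \<Rightarrow> ('r, 'm, 'e) module_scheme \<Rightarrow> 'r list
    \<Rightarrow> (nat set \<Rightarrow> 'm) \<Rightarrow> nat set \<Rightarrow> 'm" where
  "koszul_d R M xs \<phi> T =
     finsum M (\<lambda>k. if even (card {j \<in> T. j < k})
                   then (xs ! k) \<odot>\<^bsub>M\<^esub> \<phi> (T - {k})
                   else \<ominus>\<^bsub>M\<^esub> ((xs ! k) \<odot>\<^bsub>M\<^esub> \<phi> (T - {k}))) T"

definition koszul_cochain :: "('r, 'm, 'e) module_scheme \<Rightarrow> nat \<Rightarrow> nat \<Rightarrow> (nat set \<Rightarrow> 'm) \<Rightarrow> bool" where
  "koszul_cochain M l i \<phi> \<longleftrightarrow> (\<forall>S. S \<subseteq> {..<l} \<and> card S = i \<longrightarrow> \<phi> S \<in> carrier M)"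

definition koszul_cocycle :: "('r, 'c) ring_scheme \<Rightarrow> ('r, 'm, 'e) module_scheme \<Rightarrow> 'r list
    \<Rightarrow> nat \<Rightarrow> (nat set \<Rightarrow> 'm) \<Rightarrow> bool" where
  "koszul_cocycle R M xs i \<phi> \<longleftrightarrow> koszul_cochain M (length xs) i \<phi> \<and>
     (\<forall>T. T \<subseteq> {..<length xs} \<and> card T = Suc i \<longrightarrow> koszul_d R M xs \<phi> T = \<zero>\<^bsub>M\<^esub>)"

definition koszul_coboundary :: "('r, 'c) ring_scheme \<Rightarrow> ('r, 'm, 'e) module_scheme \<Rightarrow> 'r list
    \<Rightarrow> nat \<Rightarrow> (nat set \<Rightarrow> 'm) \<Rightarrow> bool" where
  "koszul_coboundary R M xs i \<phi> \<longleftrightarrow>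
     (if i = 0 then (\<forall>S. S \<subseteq> {..<length xs} \<and> card S = 0 \<longrightarrow> \<phi> S = \<zero>\<^bsub>M\<^esub>)
      else (\<exists>\<psi>. koszul_cochain M (length xs) (i - 1) \<psi> \<and>
              (\<forall>S. S \<subseteq> {..<length xs} \<and> card S = i \<longrightarrow> \<phi> S = koszul_d R M xs \<psi> S)))"

definition koszul_cohom_nonzero :: "('r, 'c) ring_scheme \<Rightarrow> ('r, 'm, 'e) module_scheme \<Rightarrow> 'r list
    \<Rightarrow> nat \<Rightarrow> bool" where
  "koszul_cohom_nonzero R M xs i \<longleftrightarrow>
     (\<exists>\<phi>. koszul_cocycle R M xs i \<phi> \<and> \<not> koszul_coboundary R M xs i \<phi>)"

definition koszul_grade_seq :: "('r, 'c) ring_scheme \<Rightarrow> 'r list \<Rightarrow> ('r, 'm, 'e) module_scheme \<Rightarrow> enat" where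
  "koszul_grade_seq R xs M = (INF i \<in> {i. koszul_cohom_nonzero R M xs i}. enat i)"

definition fin_gen_ideal :: "('r, 'c) ring_scheme \<Rightarrow> 'r set \<Rightarrow> bool" where
  "fin_gen_ideal R \<bb> \<longleftrightarrow> (\<exists>S. finite S \<and> S \<subseteq> carrier R \<and> \<bb> = genideal R S)"

text \<open>Koszul grade of a finitely generated ideal, computed on some finite generating list
  (it is independent of the choice of generators).\<close>
definition kgrade_fg :: "('r, 'c) ring_scheme \<Rightarrow> 'r set \<Rightarrow> ('r, 'm, 'e) module_scheme \<Rightarrow> enat" where
  "kgrade_fg R \<bb> M =
     koszul_grade_seq R (SOME xs. set xs \<subseteq> carrier R \<and> genideal R (set xs) = \<bb>) M"

definition kgrade :: "('r, 'c) ring_scheme \<Rightarrow> 'r set \<Rightarrow> ('r, 'm, 'e) module_scheme \<Rightarrow> enat" where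
  "kgrade R \<aa> M = (SUP \<bb> \<in> {\<bb>. \<bb> \<subseteq> \<aa> \<and> fin_gen_ideal R \<bb>}. kgrade_fg R \<bb> M)"

end

theory Submission
  imports Defs
begin

definition pw :: "('r,'m,'e) module_scheme \<Rightarrow> nat \<Rightarrow> 'm \<Rightarrow> 'm" where
  "pw M n v = (if even n then v else \<ominus>\<^bsub>M\<^esub> v)"

definition dd :: "('r,'c) ring_scheme \<Rightarrow> ('r,'m,'e) module_scheme \<Rightarrow> (nat \<Rightarrow> 'r)
    \<Rightarrow> (nat set \<Rightarrow> 'm) \<Rightarrow> nat set \<Rightarrow> 'm" where
  "dd R M x \<phi> T = finsum M (\<lambda>k. pw M (card {j\<in>T. j<k}) (x k \<odot>\<^bsub>M\<^esub> \<phi> (T - {k}))) T"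

definition ch :: "('r,'m,'e) module_scheme \<Rightarrow> nat set \<Rightarrow> nat \<Rightarrow> (nat set \<Rightarrow> 'm) \<Rightarrow> bool" where
  "ch M I i \<phi> \<longleftrightarrow> (\<forall>S. S \<subseteq> I \<and> card S = i \<longrightarrow> \<phi> S \<in> carrier M)"

definition cz :: "('r,'c) ring_scheme \<Rightarrow> ('r,'m,'e) module_scheme \<Rightarrow> nat set \<Rightarrow> (nat \<Rightarrow> 'r)
    \<Rightarrow> nat \<Rightarrow> (nat set \<Rightarrow> 'm) \<Rightarrow> bool" where
  "cz R M I x i \<phi> \<longleftrightarrow> ch M I i \<phi> \<and> (\<forall>T. T \<subseteq> I \<and> card T = Suc i \<longrightarrow> dd R M x \<phi> T = \<zero>\<^bsub>M\<^esub>)"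

definition cb :: "('r,'c) ring_scheme \<Rightarrow> ('r,'m,'e) module_scheme \<Rightarrow> nat set \<Rightarrow> (nat \<Rightarrow> 'r)
    \<Rightarrow> nat \<Rightarrow> (nat set \<Rightarrow> 'm) \<Rightarrow> bool" where
  "cb R M I x i \<phi> \<longleftrightarrow> (\<exists>\<psi>. ch M I (i - 1) \<psi> \<and> (\<forall>S. S \<subseteq> I \<and> card S = i \<longrightarrow> \<phi> S = dd R M x \<psi> S))"

definition nz :: "('r,'c) ring_scheme \<Rightarrow> ('r,'m,'e) module_scheme \<Rightarrow> nat set \<Rightarrow> (nat \<Rightarrow> 'r)
    \<Rightarrow> nat \<Rightarrow> bool" where
  "nz R M I x i \<longleftrightarrow> (\<exists>\<phi>. cz R M I x i \<phi> \<and> \<not> cb R M I x i \<phi>)"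

definition gr :: "('r,'c) ring_scheme \<Rightarrow> ('r,'m,'e) module_scheme \<Rightarrow> nat set \<Rightarrow> (nat \<Rightarrow> 'r) \<Rightarrow> enat" where
  "gr R M I x = (INF i \<in> {i. nz R M I x i}. enat i)"

lemma inf_enat_least:
  assumes "P n" "\<forall>j<n. \<not> P j"
  shows "(INF i\<in>{i. P i}. enat i) = enat n"
proof (rule antisym)
  show "(INF i\<in>{i. P i}. enat i) \<le> enat n" using assms(1) by (simp add: INF_lower)
  show "enat n \<le> (INF i\<in>{i. P i}. enat i)"
  proof (rule INF_greatest)
    fix i assume "i \<in> {i. P i}" thus "enat n \<le> enat i" using assms(2) not_less by auto
  qed
qed

lemma inf_enat_eqI:
  assumes "\<And>g. (\<forall>j<g. \<not> P j) \<longleftrightarrow> (\<forall>j<g. \<not> Q j)"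
  shows "(INF i\<in>{i. P i}. enat i) = (INF i\<in>{i. Q i}. enat i)"
proof (cases "\<exists>n. P n")
  case True
  define n where "n = (LEAST n. P n)"
  have Pn: "P n" unfolding n_def using True by (metis LeastI)
  have nP: "\<forall>j<n. \<not> P j" unfolding n_def using not_less_Least by blast
  have nQ: "\<forall>j<n. \<not> Q j" using assms nP by blast
  have "\<not> (\<forall>j<Suc n. \<not> P j)" using Pn by blast
  hence "\<not> (\<forall>j<Suc n. \<not> Q j)" using assms by blast
  then obtain j where "j < Suc n" "Q j" by blast
  with nQ have Qn: "Q n" by (metis less_SucE)
  show ?thesis using inf_enat_least[of P n, OF Pn nP] inf_enat_least[of Q n, OF Qn nQ] by simp
next
  case False
  hence "\<forall>n. \<not> Q n" using assms by (metis lessI)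
  thus ?thesis using False by simp
qed

lemma inf_enat_union:
  "(INF i\<in>{i. P i \<or> Q i}. enat i) = min (INF i\<in>{i. P i}. enat i) (INF i\<in>{i. Q i}. enat i)"
proof -
  have "{i. P i \<or> Q i} = {i. P i} \<union> {i. Q i}" by auto
  thus ?thesis by (simp add: INF_union inf_min)
qed

context module
begin

lemma M_neg_zero[simp]: "\<ominus>\<^bsub>M\<^esub> \<zero>\<^bsub>M\<^esub> = \<zero>\<^bsub>M\<^esub>"
  by (rule M.minus_equality) auto

lemma pw_closed[simp]: "v \<in> carrier M \<Longrightarrow> pw M n v \<in> carrier M"
  by (simp add: pw_def)

lemma pw_0[simp]: "pw M 0 v = v" by (simp add: pw_def)

lemma pw_par: "even n = even k \<Longrightarrow> pw M n v = pw M k v"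
  by (simp add: pw_def)

lemma pw_Suc: "v \<in> carrier M \<Longrightarrow> pw M (Suc n) v = \<ominus>\<^bsub>M\<^esub> (pw M n v)"
  by (simp add: pw_def M.minus_minus)

lemma pw_pw: "v \<in> carrier M \<Longrightarrow> pw M n (pw M k v) = pw M (n + k) v"
  by (auto simp add: pw_def M.minus_minus)

lemma pw_pw_same[simp]: "v \<in> carrier M \<Longrightarrow> pw M n (pw M n v) = v"
  by (auto simp add: pw_def M.minus_minus)

lemma pw_add: "v \<in> carrier M \<Longrightarrow> w \<in> carrier M \<Longrightarrow>
    pw M n (v \<oplus>\<^bsub>M\<^esub> w) = pw M n v \<oplus>\<^bsub>M\<^esub> pw M n w"
  by (simp add: pw_def M.minus_add)

lemma pw_neg: "v \<in> carrier M \<Longrightarrow> pw M n (\<ominus>\<^bsub>M\<^esub> v) = \<ominus>\<^bsub>M\<^esub> (pw M n v)"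
  by (simp add: pw_def)

lemma pw_smult: "a \<in> carrier R \<Longrightarrow> v \<in> carrier M \<Longrightarrow> pw M n (a \<odot>\<^bsub>M\<^esub> v) = a \<odot>\<^bsub>M\<^esub> pw M n v"
  by (simp add: pw_def smult_r_minus)

lemma pw_zero[simp]: "pw M n \<zero>\<^bsub>M\<^esub> = \<zero>\<^bsub>M\<^esub>"
  by (simp add: pw_def)

lemma pw_eq_zero: "v \<in> carrier M \<Longrightarrow> pw M n v = \<zero>\<^bsub>M\<^esub> \<Longrightarrow> v = \<zero>\<^bsub>M\<^esub>"
  by (metis pw_pw_same pw_zero)

lemma finsum_neg:
  "finite A \<Longrightarrow> f \<in> A \<rightarrow> carrier M \<Longrightarrow>
    finsum M (\<lambda>k. \<ominus>\<^bsub>M\<^esub> f k) A = \<ominus>\<^bsub>M\<^esub> finsum M f A"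
proof (induct A rule: finite_induct)
  case empty then show ?case by simp
next
  case (insert a A)
  then show ?case
    by (simp add: M.finsum_insert M.minus_add M.finsum_closed Pi_def M.a_comm)
qed

lemma finsum_pw:
  "finite A \<Longrightarrow> f \<in> A \<rightarrow> carrier M \<Longrightarrow>
    finsum M (\<lambda>k. pw M n (f k)) A = pw M n (finsum M f A)"
  by (simp add: pw_def finsum_neg)

lemma dd_closed:
  "(\<And>k. k \<in> T \<Longrightarrow> x k \<in> carrier R) \<Longrightarrow> (\<And>k. k \<in> T \<Longrightarrow> \<phi> (T - {k}) \<in> carrier M)
   \<Longrightarrow> dd R M x \<phi> T \<in> carrier M"
  unfolding dd_def by (intro M.finsum_closed) auto

lemma dd_empty[simp]: "dd R M x \<phi> {} = \<zero>\<^bsub>M\<^esub>"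
  by (simp add: dd_def)

lemma dd_cong:
  assumes "\<And>k. k \<in> T \<Longrightarrow> x k = x' k" "\<And>k. k \<in> T \<Longrightarrow> \<phi> (T - {k}) = \<phi>' (T - {k})"
    "\<And>k. k \<in> T \<Longrightarrow> x k \<in> carrier R" "\<And>k. k \<in> T \<Longrightarrow> \<phi> (T - {k}) \<in> carrier M"
  shows "dd R M x \<phi> T = dd R M x' \<phi>' T"
  unfolding dd_def using assms by (intro M.finsum_cong') auto

lemma dd_add:
  assumes "finite T" "\<And>k. k \<in> T \<Longrightarrow> x k \<in> carrier R"
    "\<And>k. k \<in> T \<Longrightarrow> \<phi> (T - {k}) \<in> carrier M" "\<And>k. k \<in> T \<Longrightarrow> \<psi> (T - {k}) \<in> carrier M"
  shows "dd R M x (\<lambda>S. \<phi> S \<oplus>\<^bsub>M\<^esub> \<psi> S) T = dd R M x \<phi> T \<oplus>\<^bsub>M\<^esub> dd R M x \<psi> T"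
proof -
  have "dd R M x (\<lambda>S. \<phi> S \<oplus>\<^bsub>M\<^esub> \<psi> S) T =
    finsum M (\<lambda>k. pw M (card {j\<in>T. j<k}) (x k \<odot>\<^bsub>M\<^esub> \<phi> (T - {k}))
       \<oplus>\<^bsub>M\<^esub> pw M (card {j\<in>T. j<k}) (x k \<odot>\<^bsub>M\<^esub> \<psi> (T - {k}))) T"
    unfolding dd_def using assms by (intro M.finsum_cong') (auto simp: smult_r_distr pw_add)
  also have "\<dots> = dd R M x \<phi> T \<oplus>\<^bsub>M\<^esub> dd R M x \<psi> T"
    unfolding dd_def using assms by (intro M.finsum_addf) auto
  finally show ?thesis .
qed

lemma dd_neg:
  assumes "finite T" "\<And>k. k \<in> T \<Longrightarrow> x k \<in> carrier R"
    "\<And>k. k \<in> T \<Longrightarrow> \<phi> (T - {k}) \<in> carrier M"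
  shows "dd R M x (\<lambda>S. \<ominus>\<^bsub>M\<^esub> \<phi> S) T = \<ominus>\<^bsub>M\<^esub> dd R M x \<phi> T"
proof -
  have "dd R M x (\<lambda>S. \<ominus>\<^bsub>M\<^esub> \<phi> S) T =
    finsum M (\<lambda>k. \<ominus>\<^bsub>M\<^esub> pw M (card {j\<in>T. j<k}) (x k \<odot>\<^bsub>M\<^esub> \<phi> (T - {k}))) T"
    unfolding dd_def using assms by (intro M.finsum_cong') (auto simp: smult_r_minus pw_neg)
  also have "\<dots> = \<ominus>\<^bsub>M\<^esub> dd R M x \<phi> T"
    unfolding dd_def using assms by (intro finsum_neg) auto
  finally show ?thesis .
qed

lemma dd_smult:
  assumes "finite T" "a \<in> carrier R" "\<And>k. k \<in> T \<Longrightarrow> x k \<in> carrier R"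
    "\<And>k. k \<in> T \<Longrightarrow> \<phi> (T - {k}) \<in> carrier M"
  shows "dd R M x (\<lambda>S. a \<odot>\<^bsub>M\<^esub> \<phi> S) T = a \<odot>\<^bsub>M\<^esub> dd R M x \<phi> T"
proof -
  have "dd R M x (\<lambda>S. a \<odot>\<^bsub>M\<^esub> \<phi> S) T =
    finsum M (\<lambda>k. a \<odot>\<^bsub>M\<^esub> pw M (card {j\<in>T. j<k}) (x k \<odot>\<^bsub>M\<^esub> \<phi> (T - {k}))) T"
    unfolding dd_def using assms
    by (intro M.finsum_cong') (auto simp: pw_smult smult_assoc1[symmetric] m_comm)
  also have "\<dots> = a \<odot>\<^bsub>M\<^esub> dd R M x \<phi> T"
    unfolding dd_def using assms by (intro finsum_smult_ldistr[symmetric]) auto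
  finally show ?thesis .
qed

lemma dd_zero:
  assumes "\<And>k. k \<in> T \<Longrightarrow> x k \<in> carrier R"
  shows "dd R M x (\<lambda>S. \<zero>\<^bsub>M\<^esub>) T = \<zero>\<^bsub>M\<^esub>"
proof -
  have "dd R M x (\<lambda>S. \<zero>\<^bsub>M\<^esub>) T = finsum M (\<lambda>k. \<zero>\<^bsub>M\<^esub>) T"
    unfolding dd_def using assms by (intro M.finsum_cong') auto
  thus ?thesis by simp
qed

end

lemma card_less_insert:
  assumes "finite T" "m \<notin> T"
  shows "card {j \<in> insert m T. j < k} = card {j\<in>T. j<k} + (if m < k then 1 else 0)"
proof (cases "m < k")
  case True
  hence "{j \<in> insert m T. j < k} = insert m {j\<in>T. j<k}" by auto
  thus ?thesis using assms True by simp
next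
  case False
  hence "{j \<in> insert m T. j < k} = {j\<in>T. j<k}" by auto
  thus ?thesis using False by simp
qed

lemma card_less_remove:
  assumes "finite T" "k \<in> T"
  shows "card {j\<in>T-{k}. j<m} + (if k < m then 1 else 0) = card {j\<in>T. j<m}"
proof -
  have "T = insert k (T - {k})" using assms by auto
  hence "card {j\<in>T. j<m} = card {j \<in> insert k (T-{k}). j < m}" by simp
  also have "\<dots> = card {j\<in>T-{k}. j<m} + (if k < m then 1 else 0)"
    using assms by (intro card_less_insert) auto
  finally show ?thesis by simp
qed

lemma parity_aux:
  fixes A a c c' :: nat
  assumes "A = a + (if m < k then 1 else 0)" "c' + (if k < m then 1 else 0) = c" "k \<noteq> (m::nat)"
  shows "even (A + c') = even (Suc c + a)"
proof (cases "m < k")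
  case True
  hence "\<not> k < m" by simp
  with True assms show ?thesis by simp presburger
next
  case False
  hence "k < m" using assms(3) by simp
  with False assms show ?thesis by simp presburger
qed

definition res2 :: "('r,'m,'e) module_scheme \<Rightarrow> nat \<Rightarrow> (nat set \<Rightarrow> 'm) \<Rightarrow> nat set \<Rightarrow> 'm" where
  "res2 M m \<phi> S = pw M (card {j\<in>S. j<m}) (\<phi> (insert m S))"

definition comb :: "('r,'m,'e) module_scheme \<Rightarrow> nat \<Rightarrow> (nat set \<Rightarrow> 'm) \<Rightarrow> (nat set \<Rightarrow> 'm)
    \<Rightarrow> nat set \<Rightarrow> 'm" where
  "comb M m \<phi>1 \<phi>2 S = (if m \<in> S then pw M (card {j\<in>S-{m}. j<m}) (\<phi>2 (S - {m})) else \<phi>1 S)"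

definition ann :: "('r,'c) ring_scheme \<Rightarrow> ('r,'m,'e) module_scheme \<Rightarrow> nat set \<Rightarrow> (nat \<Rightarrow> 'r)
    \<Rightarrow> nat \<Rightarrow> 'r set" where
  "ann R M I x g = {y \<in> carrier R. \<forall>\<phi>. cz R M I x g \<phi> \<longrightarrow> cb R M I x g (\<lambda>S. y \<odot>\<^bsub>M\<^esub> \<phi> S)}"

context module
begin

lemma dd_single: "x k \<in> carrier R \<Longrightarrow> \<phi> {} \<in> carrier M \<Longrightarrow> dd R M x \<phi> {k} = x k \<odot>\<^bsub>M\<^esub> \<phi> {}"
proof -
  assume a: "x k \<in> carrier R" "\<phi> {} \<in> carrier M"
  have h: "{j. j = k \<and> j < k} = {}" by auto
  show ?thesis unfolding dd_def using a by (simp add: h)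
qed

lemma dd_low:
  assumes "m \<notin> T" "\<And>k. k \<in> T \<Longrightarrow> x k \<in> carrier R" "\<And>k. k \<in> T \<Longrightarrow> \<phi> (T - {k}) \<in> carrier M"
  shows "dd R M (x(m:=y)) \<phi> T = dd R M x \<phi> T"
  using assms by (intro dd_cong) auto

lemma dd_high:
  assumes fin: "finite T" and mT: "m \<notin> T" and xc: "\<And>k. k \<in> T \<Longrightarrow> x k \<in> carrier R"
    and yc: "y \<in> carrier R"
    and phc: "\<And>k. k \<in> insert m T \<Longrightarrow> \<phi> (insert m T - {k}) \<in> carrier M"
  shows "dd R M (x(m:=y)) \<phi> (insert m T) =
    pw M (card {j\<in>T. j<m}) (y \<odot>\<^bsub>M\<^esub> \<phi> T \<oplus>\<^bsub>M\<^esub> \<ominus>\<^bsub>M\<^esub> dd R M x (res2 M m \<phi>) T)"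
proof -
  define c where "c = card {j\<in>T. j<m}"
  define t where "t = (\<lambda>k. pw M (card {j \<in> insert m T. j < k}) ((x(m:=y)) k \<odot>\<^bsub>M\<^esub> \<phi> (insert m T - {k})))"
  have phT: "\<phi> T \<in> carrier M" using phc[of m] mT by (simp add: insert_Diff_if)
  have ph2: "\<And>k. k \<in> T \<Longrightarrow> \<phi> (insert m (T - {k})) \<in> carrier M"
  proof -
    fix k assume k: "k \<in> T"
    have "insert m T - {k} = insert m (T - {k})" using k mT by auto
    thus "\<phi> (insert m (T - {k})) \<in> carrier M" using phc[of k] k by simp
  qed
  have r2c: "\<And>k. k \<in> T \<Longrightarrow> res2 M m \<phi> (T - {k}) \<in> carrier M"
    unfolding res2_def using ph2 by simp
  have tc: "t \<in> T \<rightarrow> carrier M" unfolding t_def using xc phc mT by (auto intro!: pw_closed smult_closed)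
  have tm: "t m = pw M c (y \<odot>\<^bsub>M\<^esub> \<phi> T)"
  proof -
    have "insert m T - {m} = T" using mT by auto
    moreover have "card {j \<in> insert m T. j < m} = c" unfolding c_def using card_less_insert[OF fin mT, of m] by simp
    ultimately show ?thesis unfolding t_def by simp
  qed
  have tk: "t k = pw M (Suc c) (pw M (card {j\<in>T. j<k}) (x k \<odot>\<^bsub>M\<^esub> res2 M m \<phi> (T - {k})))"
    if k: "k \<in> T" for k
  proof -
    have km: "k \<noteq> m" using k mT by auto
    have e1: "insert m T - {k} = insert m (T - {k})" using k mT by auto
    define c' where "c' = card {j\<in>T-{k}. j<m}"
    have "\<phi> (insert m (T - {k})) = pw M c' (res2 M m \<phi> (T - {k}))"
      unfolding res2_def c'_def using ph2[OF k] by simp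
    hence "t k = pw M (card {j \<in> insert m T. j < k}) (x k \<odot>\<^bsub>M\<^esub> pw M c' (res2 M m \<phi> (T - {k})))"
      unfolding t_def using e1 km by simp
    also have "\<dots> = pw M (card {j \<in> insert m T. j < k} + c') (x k \<odot>\<^bsub>M\<^esub> res2 M m \<phi> (T - {k}))"
      using xc[OF k] r2c[OF k] by (simp add: pw_smult[symmetric] pw_pw)
    also have "\<dots> = pw M (Suc c + card {j\<in>T. j<k}) (x k \<odot>\<^bsub>M\<^esub> res2 M m \<phi> (T - {k}))"
    proof (rule pw_par)
      have a: "card {j \<in> insert m T. j < k} = card {j\<in>T. j<k} + (if m < k then 1 else 0)"
        using card_less_insert[OF fin mT] .
      have b: "c' + (if k < m then 1 else 0) = c" unfolding c'_def c_def using card_less_remove[OF fin k] .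
      show "even (card {j \<in> insert m T. j < k} + c') = even (Suc c + card {j\<in>T. j<k})"
        using parity_aux[OF a b km] .
    qed
    also have "\<dots> = pw M (Suc c) (pw M (card {j\<in>T. j<k}) (x k \<odot>\<^bsub>M\<^esub> res2 M m \<phi> (T - {k})))"
      using xc[OF k] r2c[OF k] by (simp add: pw_pw)
    finally show ?thesis .
  qed
  have "dd R M (x(m:=y)) \<phi> (insert m T) = t m \<oplus>\<^bsub>M\<^esub> finsum M t T"
    unfolding dd_def t_def[symmetric] using fin mT tc tm phT yc
    by (subst M.finsum_insert) (auto simp: t_def)
  also have "finsum M t T = finsum M (\<lambda>k. pw M (Suc c) (pw M (card {j\<in>T. j<k}) (x k \<odot>\<^bsub>M\<^esub> res2 M m \<phi> (T - {k})))) T"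
    using tk xc r2c by (intro M.finsum_cong') auto
  also have "\<dots> = pw M (Suc c) (dd R M x (res2 M m \<phi>) T)"
    unfolding dd_def using fin xc r2c by (intro finsum_pw) auto
  also have "\<dots> = pw M c (\<ominus>\<^bsub>M\<^esub> dd R M x (res2 M m \<phi>) T)"
    using dd_closed[of T x "res2 M m \<phi>"] xc r2c by (simp add: pw_Suc pw_neg)
  also have "t m \<oplus>\<^bsub>M\<^esub> pw M c (\<ominus>\<^bsub>M\<^esub> dd R M x (res2 M m \<phi>) T) =
     pw M c (y \<odot>\<^bsub>M\<^esub> \<phi> T \<oplus>\<^bsub>M\<^esub> \<ominus>\<^bsub>M\<^esub> dd R M x (res2 M m \<phi>) T)"
    unfolding tm using dd_closed[of T x "res2 M m \<phi>"] xc r2c phT yc by (simp add: pw_add)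
  finally show ?thesis unfolding c_def .
qed

end

context module
begin

lemma ch_sub: "ch M (insert m I) i \<phi> \<Longrightarrow> ch M I i \<phi>" by (auto simp: ch_def)

lemma ch_minus:
  assumes "finite I" "ch M I j \<psi>" "S \<subseteq> I" "card S = Suc j" "k \<in> S"
  shows "\<psi> (S - {k}) \<in> carrier M"
proof -
  have "finite S" using assms finite_subset by blast
  hence "card (S - {k}) = j" using assms by simp
  moreover have "S - {k} \<subseteq> I" using assms by auto
  ultimately show ?thesis using assms(2) by (simp add: ch_def)
qed

lemma ch_minus1:
  assumes "finite I" "ch M I (i - 1) \<psi>" "S \<subseteq> I" "card S = i" "k \<in> S"
  shows "\<psi> (S - {k}) \<in> carrier M"
proof -
  have "finite S" using assms finite_subset by blast
  hence "i = Suc (i - 1)" using assms by (cases i) auto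
  thus ?thesis using ch_minus[OF assms(1,2,3)] assms by simp
qed

lemma ch_res2:
  assumes "finite I" "m \<notin> I" "ch M (insert m I) (Suc i) \<phi>"
  shows "ch M I i (res2 M m \<phi>)"
  unfolding ch_def res2_def
proof (intro allI impI)
  fix S assume S: "S \<subseteq> I \<and> card S = i"
  hence "finite S" "m \<notin> S" using assms finite_subset by auto
  hence "card (insert m S) = Suc i" using S by simp
  moreover have "insert m S \<subseteq> insert m I" using S by auto
  ultimately show "pw M (card {j \<in> S. j < m}) (\<phi> (insert m S)) \<in> carrier M"
    using assms(3) by (simp add: ch_def)
qed

lemma ch_comb:
  assumes "finite I" "m \<notin> I" "ch M I i \<phi>1" "ch M I (i - 1) \<phi>2"
  shows "ch M (insert m I) i (comb M m \<phi>1 \<phi>2)"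
  unfolding ch_def
proof (intro allI impI)
  fix S assume S: "S \<subseteq> insert m I \<and> card S = i"
  have fS: "finite S" using S assms(1) finite_subset by (metis finite_insert)
  show "comb M m \<phi>1 \<phi>2 S \<in> carrier M"
  proof (cases "m \<in> S")
    case True
    have "S - {m} \<subseteq> I" "card (S - {m}) = i - 1" using S True fS by auto
    thus ?thesis using True assms(4) by (simp add: ch_def comb_def)
  next
    case False
    hence "S \<subseteq> I" using S by auto
    thus ?thesis using False S assms(3) by (simp add: ch_def comb_def)
  qed
qed

lemma comb_low: "m \<notin> S \<Longrightarrow> comb M m \<phi>1 \<phi>2 S = \<phi>1 S" by (simp add: comb_def)

lemma res2_comb:
  assumes "m \<notin> S" "\<phi>2 S \<in> carrier M"
  shows "res2 M m (comb M m \<phi>1 \<phi>2) S = \<phi>2 S"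
proof -
  have "insert m S - {m} = S" using assms by auto
  thus ?thesis using assms by (simp add: res2_def comb_def)
qed

lemma comb_res2:
  assumes "m \<in> S" "\<phi> S \<in> carrier M"
  shows "comb M m \<phi>1 (res2 M m \<phi>) S = \<phi> S"
proof -
  have "insert m (S - {m}) = S" using assms by auto
  thus ?thesis using assms by (simp add: res2_def comb_def)
qed

lemma cb_cong:
  assumes "cb R M I x i \<alpha>" "\<And>S. S \<subseteq> I \<Longrightarrow> card S = i \<Longrightarrow> \<alpha> S = \<beta> S"
  shows "cb R M I x i \<beta>"
proof -
  obtain \<psi> where "ch M I (i - 1) \<psi>" "\<And>S. S \<subseteq> I \<Longrightarrow> card S = i \<Longrightarrow> \<alpha> S = dd R M x \<psi> S"
    using assms(1) by (auto simp: cb_def)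
  thus ?thesis using assms(2) unfolding cb_def by (intro exI[of _ \<psi>]) auto
qed

lemma cb_add:
  assumes fin: "finite I" and xc: "\<And>k. k \<in> I \<Longrightarrow> x k \<in> carrier R"
    and A: "cb R M I x i \<alpha>" and B: "cb R M I x i \<beta>"
  shows "cb R M I x i (\<lambda>S. \<alpha> S \<oplus>\<^bsub>M\<^esub> \<beta> S)"
proof -
  obtain \<psi>a where a: "ch M I (i - 1) \<psi>a" "\<And>S. S \<subseteq> I \<Longrightarrow> card S = i \<Longrightarrow> \<alpha> S = dd R M x \<psi>a S"
    using A by (auto simp: cb_def)
  obtain \<psi>b where b: "ch M I (i - 1) \<psi>b" "\<And>S. S \<subseteq> I \<Longrightarrow> card S = i \<Longrightarrow> \<beta> S = dd R M x \<psi>b S"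
    using B by (auto simp: cb_def)
  show ?thesis unfolding cb_def
  proof (intro exI[of _ "\<lambda>S. \<psi>a S \<oplus>\<^bsub>M\<^esub> \<psi>b S"] conjI allI impI)
    show "ch M I (i - 1) (\<lambda>S. \<psi>a S \<oplus>\<^bsub>M\<^esub> \<psi>b S)" using a(1) b(1) by (auto simp: ch_def)
    fix S assume S: "S \<subseteq> I \<and> card S = i"
    have fS: "finite S" using S fin finite_subset by blast
    show "\<alpha> S \<oplus>\<^bsub>M\<^esub> \<beta> S = dd R M x (\<lambda>S. \<psi>a S \<oplus>\<^bsub>M\<^esub> \<psi>b S) S"
    proof -
      have xS: "\<And>k. k \<in> S \<Longrightarrow> x k \<in> carrier R" using S xc by auto
      have pa: "\<And>k. k \<in> S \<Longrightarrow> \<psi>a (S - {k}) \<in> carrier M" using ch_minus1[OF fin a(1)] S by auto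
      have pb: "\<And>k. k \<in> S \<Longrightarrow> \<psi>b (S - {k}) \<in> carrier M" using ch_minus1[OF fin b(1)] S by auto
      show ?thesis using a(2)[of S] b(2)[of S] S by (simp add: dd_add[where T=S and x=x and \<phi>=\<psi>a and \<psi>=\<psi>b, OF fS xS pa pb])
    qed
  qed
qed

lemma cb_neg:
  assumes fin: "finite I" and xc: "\<And>k. k \<in> I \<Longrightarrow> x k \<in> carrier R"
    and A: "cb R M I x i \<alpha>"
  shows "cb R M I x i (\<lambda>S. \<ominus>\<^bsub>M\<^esub> \<alpha> S)"
proof -
  obtain \<psi>a where a: "ch M I (i - 1) \<psi>a" "\<And>S. S \<subseteq> I \<Longrightarrow> card S = i \<Longrightarrow> \<alpha> S = dd R M x \<psi>a S"
    using A by (auto simp: cb_def)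
  show ?thesis unfolding cb_def
  proof (intro exI[of _ "\<lambda>S. \<ominus>\<^bsub>M\<^esub> \<psi>a S"] conjI allI impI)
    show "ch M I (i - 1) (\<lambda>S. \<ominus>\<^bsub>M\<^esub> \<psi>a S)" using a(1) by (auto simp: ch_def)
    fix S assume S: "S \<subseteq> I \<and> card S = i"
    have fS: "finite S" using S fin finite_subset by blast
    show "\<ominus>\<^bsub>M\<^esub> \<alpha> S = dd R M x (\<lambda>S. \<ominus>\<^bsub>M\<^esub> \<psi>a S) S"
    proof -
      have xS: "\<And>k. k \<in> S \<Longrightarrow> x k \<in> carrier R" using S xc by auto
      have pa: "\<And>k. k \<in> S \<Longrightarrow> \<psi>a (S - {k}) \<in> carrier M" using ch_minus1[OF fin a(1)] S by auto
      show ?thesis using a(2)[of S] S by (simp add: dd_neg[where T=S and x=x and \<phi>=\<psi>a, OF fS xS pa])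
    qed
  qed
qed

lemma cb_smult:
  assumes fin: "finite I" and xc: "\<And>k. k \<in> I \<Longrightarrow> x k \<in> carrier R" and ac: "a \<in> carrier R"
    and A: "cb R M I x i \<alpha>"
  shows "cb R M I x i (\<lambda>S. a \<odot>\<^bsub>M\<^esub> \<alpha> S)"
proof -
  obtain \<psi>a where a: "ch M I (i - 1) \<psi>a" "\<And>S. S \<subseteq> I \<Longrightarrow> card S = i \<Longrightarrow> \<alpha> S = dd R M x \<psi>a S"
    using A by (auto simp: cb_def)
  show ?thesis unfolding cb_def
  proof (intro exI[of _ "\<lambda>S. a \<odot>\<^bsub>M\<^esub> \<psi>a S"] conjI allI impI)
    show "ch M I (i - 1) (\<lambda>S. a \<odot>\<^bsub>M\<^esub> \<psi>a S)" using a(1) ac by (auto simp: ch_def)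
    fix S assume S: "S \<subseteq> I \<and> card S = i"
    have fS: "finite S" using S fin finite_subset by blast
    show "a \<odot>\<^bsub>M\<^esub> \<alpha> S = dd R M x (\<lambda>S. a \<odot>\<^bsub>M\<^esub> \<psi>a S) S"
    proof -
      have xS: "\<And>k. k \<in> S \<Longrightarrow> x k \<in> carrier R" using S xc by auto
      have pa: "\<And>k. k \<in> S \<Longrightarrow> \<psi>a (S - {k}) \<in> carrier M" using ch_minus1[OF fin a(1)] S by auto
      show ?thesis using a(2)[of S] S by (simp add: dd_smult[where T=S and a=a and x=x and \<phi>=\<psi>a, OF fS ac xS pa])
    qed
  qed
qed

lemma cb_zero:
  assumes xc: "\<And>k. k \<in> I \<Longrightarrow> x k \<in> carrier R"
  shows "cb R M I x i (\<lambda>S. \<zero>\<^bsub>M\<^esub>)"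
  unfolding cb_def
proof (intro exI[of _ "\<lambda>S. \<zero>\<^bsub>M\<^esub>"] conjI allI impI)
  show "ch M I (i - 1) (\<lambda>S. \<zero>\<^bsub>M\<^esub>)" by (auto simp: ch_def)
  fix S assume S: "S \<subseteq> I \<and> card S = i"
  have xS: "\<And>k. k \<in> S \<Longrightarrow> x k \<in> carrier R" using S xc by auto
  show "\<zero>\<^bsub>M\<^esub> = dd R M x (\<lambda>S. \<zero>\<^bsub>M\<^esub>) S" using dd_zero[OF xS] by simp
qed

lemma ann_ideal:
  assumes fin: "finite I" and xc: "\<And>k. k \<in> I \<Longrightarrow> x k \<in> carrier R"
  shows "ideal (ann R M I x g) R"
proof -
  have chg: "\<And>\<phi> S. cz R M I x g \<phi> \<Longrightarrow> S \<subseteq> I \<Longrightarrow> card S = g \<Longrightarrow> \<phi> S \<in> carrier M"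
    by (auto simp: cz_def ch_def)
  have sub: "ann R M I x g \<subseteq> carrier R" by (auto simp: ann_def)
  have addc: "a \<oplus> b \<in> ann R M I x g" if a: "a \<in> ann R M I x g" and b: "b \<in> ann R M I x g" for a b
  proof -
    have ac: "a \<in> carrier R" and bc: "b \<in> carrier R" using a b by (auto simp: ann_def)
    show ?thesis unfolding ann_def
    proof (intro CollectI conjI allI impI)
      show "a \<oplus> b \<in> carrier R" using ac bc by simp
      fix \<phi> assume cz: "cz R M I x g \<phi>"
      have "cb R M I x g (\<lambda>S. a \<odot>\<^bsub>M\<^esub> \<phi> S \<oplus>\<^bsub>M\<^esub> b \<odot>\<^bsub>M\<^esub> \<phi> S)"
        using cb_add[OF fin xc] a b cz by (auto simp: ann_def)
      thus "cb R M I x g (\<lambda>S. (a \<oplus> b) \<odot>\<^bsub>M\<^esub> \<phi> S)"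
        by (rule cb_cong) (simp add: smult_l_distr ac bc chg[OF cz])
    qed
  qed
  have mulc: "r \<otimes> a \<in> ann R M I x g" if a: "a \<in> ann R M I x g" and rc: "r \<in> carrier R" for a r
  proof -
    have ac: "a \<in> carrier R" using a by (auto simp: ann_def)
    show ?thesis unfolding ann_def
    proof (intro CollectI conjI allI impI)
      show "r \<otimes> a \<in> carrier R" using ac rc by simp
      fix \<phi> assume cz: "cz R M I x g \<phi>"
      have "cb R M I x g (\<lambda>S. r \<odot>\<^bsub>M\<^esub> (a \<odot>\<^bsub>M\<^esub> \<phi> S))"
        using cb_smult[OF fin xc rc] a cz by (auto simp: ann_def)
      thus "cb R M I x g (\<lambda>S. (r \<otimes> a) \<odot>\<^bsub>M\<^esub> \<phi> S)"
        by (rule cb_cong) (simp add: smult_assoc1 ac rc chg[OF cz])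
    qed
  qed
  have negc: "\<ominus> a \<in> ann R M I x g" if a: "a \<in> ann R M I x g" for a
  proof -
    have ac: "a \<in> carrier R" using a by (auto simp: ann_def)
    show ?thesis unfolding ann_def
    proof (intro CollectI conjI allI impI)
      show "\<ominus> a \<in> carrier R" using ac by simp
      fix \<phi> assume cz: "cz R M I x g \<phi>"
      have "cb R M I x g (\<lambda>S. \<ominus>\<^bsub>M\<^esub> (a \<odot>\<^bsub>M\<^esub> \<phi> S))"
        using cb_neg[OF fin xc] a cz by (auto simp: ann_def)
      thus "cb R M I x g (\<lambda>S. (\<ominus> a) \<odot>\<^bsub>M\<^esub> \<phi> S)"
        by (rule cb_cong) (simp add: smult_l_minus ac chg[OF cz])
    qed
  qed
  have zc: "\<zero> \<in> ann R M I x g"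
    unfolding ann_def
  proof (intro CollectI conjI allI impI)
    show "\<zero> \<in> carrier R" by simp
    fix \<phi> assume cz: "cz R M I x g \<phi>"
    show "cb R M I x g (\<lambda>S. \<zero> \<odot>\<^bsub>M\<^esub> \<phi> S)"
    proof (rule cb_cong[OF cb_zero[OF xc]])
      fix S assume "S \<subseteq> I" "card S = g"
      hence "\<phi> S \<in> carrier M" using chg[OF cz] by blast
      thus "\<zero>\<^bsub>M\<^esub> = \<zero> \<odot>\<^bsub>M\<^esub> \<phi> S" by simp
    qed
  qed
  show ?thesis
  proof (rule idealI)
    show "ring R" by (rule R.ring_axioms)
    show "subgroup (ann R M I x g) (add_monoid R)"
      by (rule subgroup.intro) (auto simp: sub addc zc negc a_inv_def[symmetric])
    show "\<And>a r. a \<in> ann R M I x g \<Longrightarrow> r \<in> carrier R \<Longrightarrow> r \<otimes> a \<in> ann R M I x g" by (rule mulc)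
    show "\<And>a r. a \<in> ann R M I x g \<Longrightarrow> r \<in> carrier R \<Longrightarrow> a \<otimes> r \<in> ann R M I x g"
      using mulc sub by (metis m_comm subsetD)
  qed
qed

end

lemma parity_aux2:
  fixes A a c c' :: nat
  assumes "A = a + (if k < m then 1 else 0)" "c' + (if m < k then 1 else 0) = c" "k \<noteq> (m::nat)"
  shows "even (a + c') = even (Suc c + A)"
proof (cases "m < k")
  case True
  hence "\<not> k < m" by simp
  with True assms show ?thesis by simp presburger
next
  case False
  hence "k < m" using assms(3) by simp
  with False assms show ?thesis by simp presburger
qed

context module
begin

lemma xk_ann:
  assumes fin: "finite I" and xc: "\<And>k. k \<in> I \<Longrightarrow> x k \<in> carrier R" and kI: "k \<in> I"
  shows "x k \<in> ann R M I x g"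
  unfolding ann_def
proof (intro CollectI conjI allI impI)
  show xk: "x k \<in> carrier R" using xc kI by simp
  fix \<phi> assume cz: "cz R M I x g \<phi>"
  have chp: "ch M I g \<phi>" using cz by (simp add: cz_def)
  show "cb R M I x g (\<lambda>S. x k \<odot>\<^bsub>M\<^esub> \<phi> S)"
  proof (cases g)
    case 0
    have "dd R M x \<phi> {k} = \<zero>\<^bsub>M\<^esub>" using cz kI 0 by (auto simp: cz_def)
    moreover have "\<phi> {} \<in> carrier M" using chp 0 by (auto simp: ch_def)
    ultimately have e: "x k \<odot>\<^bsub>M\<^esub> \<phi> {} = \<zero>\<^bsub>M\<^esub>" using dd_single[of x k \<phi>, OF xk] by simp
    show ?thesis unfolding cb_def
    proof (intro exI[of _ "\<lambda>S. \<zero>\<^bsub>M\<^esub>"] conjI allI impI)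
      show "ch M I (g - 1) (\<lambda>S. \<zero>\<^bsub>M\<^esub>)" by (auto simp: ch_def)
      fix S assume S: "S \<subseteq> I \<and> card S = g"
      have "finite S" using S fin finite_subset by blast
      hence "S = {}" using S 0 by simp
      thus "x k \<odot>\<^bsub>M\<^esub> \<phi> S = dd R M x (\<lambda>S. \<zero>\<^bsub>M\<^esub>) S" using e by simp
    qed
  next
    case (Suc g')
    define h where "h = (\<lambda>S. if k \<in> S then \<zero>\<^bsub>M\<^esub> else pw M (card {j\<in>S. j<k}) (\<phi> (insert k S)))"
    have chh: "ch M I g' h"
      unfolding ch_def
    proof (intro allI impI)
      fix S assume S: "S \<subseteq> I \<and> card S = g'"
      show "h S \<in> carrier M"
      proof (cases "k \<in> S")
        case False
        have "finite S" using S fin finite_subset by blast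
        hence "card (insert k S) = g" using S False Suc by simp
        moreover have "insert k S \<subseteq> I" using S kI by auto
        ultimately show ?thesis using chp False by (simp add: h_def ch_def)
      qed (simp add: h_def)
    qed
    show ?thesis unfolding cb_def
    proof (intro exI[of _ h] conjI allI impI)
      show "ch M I (g - 1) h" using chh Suc by simp
      fix S assume S: "S \<subseteq> I \<and> card S = g"
      have fS: "finite S" using S fin finite_subset by blast
      have xS: "\<And>k. k \<in> S \<Longrightarrow> x k \<in> carrier R" using S xc by auto
      have phS: "\<phi> S \<in> carrier M" using chp S by (simp add: ch_def)
      have hS: "\<And>m. m \<in> S \<Longrightarrow> h (S - {m}) \<in> carrier M" using ch_minus[OF fin chh] S Suc by auto
      show "x k \<odot>\<^bsub>M\<^esub> \<phi> S = dd R M x h S"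
      proof (cases "k \<in> S")
        case True
        have "dd R M x h S = finsum M (\<lambda>m. if k = m then x k \<odot>\<^bsub>M\<^esub> \<phi> S else \<zero>\<^bsub>M\<^esub>) S"
          unfolding dd_def
        proof (intro M.finsum_cong')
          show "(\<lambda>m. if k = m then x k \<odot>\<^bsub>M\<^esub> \<phi> S else \<zero>\<^bsub>M\<^esub>) \<in> S \<rightarrow> carrier M"
            using xk phS by auto
          fix m assume m: "m \<in> S"
          show "pw M (card {j \<in> S. j < m}) (x m \<odot>\<^bsub>M\<^esub> h (S - {m})) =
            (if k = m then x k \<odot>\<^bsub>M\<^esub> \<phi> S else \<zero>\<^bsub>M\<^esub>)"
          proof (cases "k = m")
            case True
            have e1: "insert k (S - {k}) = S" using \<open>k \<in> S\<close> by auto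
            have e2: "{j \<in> S - {k}. j < k} = {j \<in> S. j < k}" by auto
            show ?thesis using True e1 e2 xk phS by (simp add: h_def pw_smult)
          next
            case False
            hence "k \<in> S - {m}" using \<open>k \<in> S\<close> by auto
            thus ?thesis using False xS m by (simp add: h_def)
          qed
        qed simp
        also have "\<dots> = x k \<odot>\<^bsub>M\<^esub> \<phi> S"
          using M.finsum_singleton[OF True fS, of "\<lambda>_. x k \<odot>\<^bsub>M\<^esub> \<phi> S"] xk phS by auto
        finally show ?thesis by simp
      next
        case False
        define c where "c = card {j\<in>S. j<k}"
        define P where "P = pw M c (x k \<odot>\<^bsub>M\<^esub> \<phi> S)"
        define t where "t = (\<lambda>m. pw M (card {j \<in> insert k S. j < m}) (x m \<odot>\<^bsub>M\<^esub> \<phi> (insert k S - {m})))"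
        have kS: "insert k S \<subseteq> I" "card (insert k S) = Suc g" using S kI False fS by auto
        have phk: "\<And>m. m \<in> S \<Longrightarrow> \<phi> (insert k S - {m}) \<in> carrier M"
          using ch_minus[OF fin chp kS] by auto
        have tc: "t \<in> S \<rightarrow> carrier M" unfolding t_def using xS phk by auto
        have Pc: "P \<in> carrier M" unfolding P_def using xk phS by simp
        have "dd R M x \<phi> (insert k S) = \<zero>\<^bsub>M\<^esub>" using cz kS by (simp add: cz_def)
        moreover have "dd R M x \<phi> (insert k S) = t k \<oplus>\<^bsub>M\<^esub> finsum M t S"
          unfolding dd_def t_def[symmetric] using fS False tc xk phS
          by (subst M.finsum_insert) (auto simp: t_def insert_Diff_if)
        moreover have "t k = P"
        proof -
          have "card {j \<in> insert k S. j < k} = c" unfolding c_def using card_less_insert[OF fS False, of k] by simp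
          moreover have "insert k S - {k} = S" using False by auto
          ultimately show ?thesis unfolding t_def P_def by simp
        qed
        ultimately have "P \<oplus>\<^bsub>M\<^esub> finsum M t S = \<zero>\<^bsub>M\<^esub>" by simp
        hence Q: "finsum M t S = \<ominus>\<^bsub>M\<^esub> P"
          using Pc M.finsum_closed[OF tc] by (metis M.add.inv_equality M.l_neg M.add.m_comm M.minus_minus)
        have "dd R M x h S = finsum M (\<lambda>m. pw M (Suc c) (t m)) S"
          unfolding dd_def
        proof (intro M.finsum_cong')
          show "(\<lambda>m. pw M (Suc c) (t m)) \<in> S \<rightarrow> carrier M" using tc by (auto intro!: pw_closed)
          fix m assume m: "m \<in> S"
          have km: "k \<noteq> m" using m False by auto
          have e1: "insert k (S - {m}) = insert k S - {m}" using km by auto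
          have hm: "h (S - {m}) = pw M (card {j\<in>S-{m}. j<k}) (\<phi> (insert k S - {m}))"
            unfolding h_def using False e1 by simp
          have a: "card {j \<in> insert k S. j < m} = card {j\<in>S. j<m} + (if k < m then 1 else 0)"
            using card_less_insert[OF fS False] .
          have b: "card {j\<in>S-{m}. j<k} + (if m < k then 1 else 0) = c"
            unfolding c_def using card_less_remove[OF fS m] .
          define a' where "a' = card {j\<in>S. j<m}"
          define b' where "b' = card {j\<in>S-{m}. j<k}"
          define A' where "A' = card {j \<in> insert k S. j < m}"
          have par: "even (a' + b') = even (Suc c + A')"
            unfolding a'_def b'_def A'_def using parity_aux2[OF a b km] by simp
          have xm: "x m \<in> carrier R" using xS[OF m] .
          have pm: "\<phi> (insert k S - {m}) \<in> carrier M" using phk[OF m] .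
          show "pw M (card {j \<in> S. j < m}) (x m \<odot>\<^bsub>M\<^esub> h (S - {m})) = pw M (Suc c) (t m)"
            unfolding hm t_def a'_def[symmetric] b'_def[symmetric] A'_def[symmetric]
            using xm pm by (simp add: pw_smult[symmetric] pw_pw pw_par[OF par])
        qed simp
        also have "\<dots> = pw M (Suc c) (\<ominus>\<^bsub>M\<^esub> P)" using finsum_pw[OF fS tc] Q by simp
        also have "\<dots> = x k \<odot>\<^bsub>M\<^esub> \<phi> S"
          unfolding P_def using xk phS by (simp add: pw_Suc pw_neg M.minus_minus)
        finally show ?thesis by simp
      qed
    qed
  qed
qed

lemma genideal_ann:
  assumes fin: "finite I" and xc: "\<And>k. k \<in> I \<Longrightarrow> x k \<in> carrier R"
  shows "genideal R (x ` I) \<subseteq> ann R M I x g"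
proof -
  have "ideal (ann R M I x g) R" by (rule ann_ideal[of I x g, OF fin xc])
  moreover have "x ` I \<subseteq> ann R M I x g" using xk_ann[of I x, OF fin xc] by blast
  ultimately show ?thesis by (rule genideal_minimal)
qed

end

context module
begin

lemma claim1:
  assumes fin: "finite I" and mI: "m \<notin> I" and xc: "\<And>k. k \<in> I \<Longrightarrow> x k \<in> carrier R"
    and yc: "y \<in> carrier R" and van: "\<forall>j<g. \<not> nz R M I x j" and ig: "i < g"
  shows "\<not> nz R M (insert m I) (x(m:=y)) i"
proof
  assume "nz R M (insert m I) (x(m:=y)) i"
  then obtain \<phi> where cz: "cz R M (insert m I) (x(m:=y)) i \<phi>"
    and ncb: "\<not> cb R M (insert m I) (x(m:=y)) i \<phi>" by (auto simp: nz_def)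
  have finI': "finite (insert m I)" using fin by simp
  have chp: "ch M (insert m I) i \<phi>" using cz by (simp add: cz_def)
  have cz1: "cz R M I x i \<phi>"
    unfolding cz_def
  proof (intro conjI allI impI)
    show "ch M I i \<phi>" using chp by (rule ch_sub)
    fix T assume T: "T \<subseteq> I \<and> card T = Suc i"
    have mT: "m \<notin> T" using T mI by auto
    have xT: "\<And>k. k \<in> T \<Longrightarrow> x k \<in> carrier R" using T xc by auto
    have pT: "\<And>k. k \<in> T \<Longrightarrow> \<phi> (T - {k}) \<in> carrier M" using ch_minus[OF fin ch_sub[OF chp]] T by auto
    have "dd R M x \<phi> T = dd R M (x(m:=y)) \<phi> T" using dd_low[where T=T and x=x and \<phi>=\<phi> and m=m and y=y, OF mT xT pT] by simp
    also have "\<dots> = \<zero>\<^bsub>M\<^esub>" using cz T by (auto simp: cz_def)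
    finally show "dd R M x \<phi> T = \<zero>\<^bsub>M\<^esub>" .
  qed
  hence "cb R M I x i \<phi>" using van ig by (auto simp: nz_def)
  then obtain \<psi>1 where ch1: "ch M I (i - 1) \<psi>1"
    and eq1: "\<And>S. S \<subseteq> I \<Longrightarrow> card S = i \<Longrightarrow> \<phi> S = dd R M x \<psi>1 S" by (auto simp: cb_def)
  show False
  proof (cases i)
    case 0
    have "\<phi> {} = \<zero>\<^bsub>M\<^esub>" using eq1[of "{}"] 0 by simp
    have "cb R M (insert m I) (x(m:=y)) i \<phi>"
      unfolding cb_def
    proof (intro exI[of _ "\<lambda>S. \<zero>\<^bsub>M\<^esub>"] conjI allI impI)
      show "ch M (insert m I) (i - 1) (\<lambda>S. \<zero>\<^bsub>M\<^esub>)" by (auto simp: ch_def)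
      fix S assume S: "S \<subseteq> insert m I \<and> card S = i"
      have "finite S" using S finI' finite_subset by blast
      hence "S = {}" using S 0 by simp
      thus "\<phi> S = dd R M (x(m:=y)) (\<lambda>S. \<zero>\<^bsub>M\<^esub>) S" using \<open>\<phi> {} = \<zero>\<^bsub>M\<^esub>\<close> by simp
    qed
    with ncb show False by simp
  next
    case (Suc i')
    define \<phi>2 where "\<phi>2 = res2 M m \<phi>"
    have ch2: "ch M I i' \<phi>2" unfolding \<phi>2_def using ch_res2[OF fin mI] chp Suc by simp
    define \<theta> where "\<theta> = (\<lambda>S. y \<odot>\<^bsub>M\<^esub> \<psi>1 S \<oplus>\<^bsub>M\<^esub> \<ominus>\<^bsub>M\<^esub> \<phi>2 S)"
    have ch1': "ch M I i' \<psi>1" using ch1 Suc by simp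
    have chth: "ch M I i' \<theta>" using ch1' ch2 yc unfolding \<theta>_def by (auto simp: ch_def)
    have czth: "cz R M I x i' \<theta>"
      unfolding cz_def
    proof (intro conjI allI impI chth)
      fix T assume T: "T \<subseteq> I \<and> card T = Suc i'"
      have fT: "finite T" using T fin finite_subset by blast
      have mT: "m \<notin> T" using T mI by auto
      have xT: "\<And>k. k \<in> T \<Longrightarrow> x k \<in> carrier R" using T xc by auto
      have p1: "\<And>k. k \<in> T \<Longrightarrow> \<psi>1 (T - {k}) \<in> carrier M" using ch_minus[OF fin ch1'] T by auto
      have p2: "\<And>k. k \<in> T \<Longrightarrow> \<phi>2 (T - {k}) \<in> carrier M" using ch_minus[OF fin ch2] T by auto
      have p1y: "\<And>k. k \<in> T \<Longrightarrow> y \<odot>\<^bsub>M\<^esub> \<psi>1 (T - {k}) \<in> carrier M" using p1 yc by simp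
      have p2n: "\<And>k. k \<in> T \<Longrightarrow> \<ominus>\<^bsub>M\<^esub> \<phi>2 (T - {k}) \<in> carrier M" using p2 by simp
      have "dd R M x \<theta> T = dd R M x (\<lambda>S. y \<odot>\<^bsub>M\<^esub> \<psi>1 S) T \<oplus>\<^bsub>M\<^esub> dd R M x (\<lambda>S. \<ominus>\<^bsub>M\<^esub> \<phi>2 S) T"
        unfolding \<theta>_def by (rule dd_add[where T=T and x=x and \<phi>="\<lambda>S. y \<odot>\<^bsub>M\<^esub> \<psi>1 S" and \<psi>="\<lambda>S. \<ominus>\<^bsub>M\<^esub> \<phi>2 S", OF fT xT p1y p2n])
      also have "\<dots> = y \<odot>\<^bsub>M\<^esub> \<phi> T \<oplus>\<^bsub>M\<^esub> \<ominus>\<^bsub>M\<^esub> dd R M x \<phi>2 T"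
        using dd_smult[where T=T and a=y and x=x and \<phi>=\<psi>1, OF fT yc xT p1]
          dd_neg[where T=T and x=x and \<phi>=\<phi>2, OF fT xT p2] eq1[of T] T Suc by simp
      finally have e: "dd R M x \<theta> T = y \<odot>\<^bsub>M\<^esub> \<phi> T \<oplus>\<^bsub>M\<^esub> \<ominus>\<^bsub>M\<^esub> dd R M x \<phi>2 T" .
      have iT: "insert m T \<subseteq> insert m I" "card (insert m T) = Suc i" using T mT fT Suc by auto
      have pi: "\<And>k. k \<in> insert m T \<Longrightarrow> \<phi> (insert m T - {k}) \<in> carrier M"
        using ch_minus[OF finI' chp iT] by auto
      have "dd R M (x(m:=y)) \<phi> (insert m T) = \<zero>\<^bsub>M\<^esub>" using cz iT by (simp add: cz_def)
      hence "pw M (card {j\<in>T. j<m}) (y \<odot>\<^bsub>M\<^esub> \<phi> T \<oplus>\<^bsub>M\<^esub> \<ominus>\<^bsub>M\<^esub> dd R M x \<phi>2 T) = \<zero>\<^bsub>M\<^esub>"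
        unfolding \<phi>2_def using dd_high[where T=T and x=x and \<phi>=\<phi> and m=m and y=y, OF fT mT xT yc pi] by simp
      moreover have "y \<odot>\<^bsub>M\<^esub> \<phi> T \<oplus>\<^bsub>M\<^esub> \<ominus>\<^bsub>M\<^esub> dd R M x \<phi>2 T \<in> carrier M"
        using pi[of m] mT yc dd_closed[where T=T and x=x and \<phi>=\<phi>2, OF xT p2] by (simp add: insert_Diff_if)
      ultimately show "dd R M x \<theta> T = \<zero>\<^bsub>M\<^esub>" using e pw_eq_zero by metis
    qed
    have "i' < g" using ig Suc by simp
    hence "cb R M I x i' \<theta>" using czth van by (auto simp: nz_def)
    then obtain \<psi>2 where chps2: "ch M I (i' - 1) \<psi>2"
      and eq2: "\<And>S. S \<subseteq> I \<Longrightarrow> card S = i' \<Longrightarrow> \<theta> S = dd R M x \<psi>2 S" by (auto simp: cb_def)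
    define \<psi> where "\<psi> = comb M m \<psi>1 \<psi>2"
    have chps: "ch M (insert m I) i' \<psi>" unfolding \<psi>_def by (rule ch_comb[OF fin mI ch1' chps2])
    have "cb R M (insert m I) (x(m:=y)) i \<phi>"
      unfolding cb_def
    proof (intro exI[of _ \<psi>] conjI allI impI)
      show "ch M (insert m I) (i - 1) \<psi>" using chps Suc by simp
      fix S assume S: "S \<subseteq> insert m I \<and> card S = i"
      have fS: "finite S" using S finI' finite_subset by blast
      have pS: "\<And>k. k \<in> S \<Longrightarrow> \<psi> (S - {k}) \<in> carrier M" using ch_minus[OF finI' chps] S Suc by auto
      show "\<phi> S = dd R M (x(m:=y)) \<psi> S"
      proof (cases "m \<in> S")
        case False
        have SI: "S \<subseteq> I" using S False by auto
        have xS: "\<And>k. k \<in> S \<Longrightarrow> x k \<in> carrier R" using SI xc by auto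
        have "dd R M (x(m:=y)) \<psi> S = dd R M x \<psi> S" by (rule dd_low[where T=S and x=x and \<phi>=\<psi> and m=m and y=y, OF False xS pS])
        also have "\<dots> = dd R M x \<psi>1 S"
          using xS pS False by (intro dd_cong) (auto simp: \<psi>_def comb_low)
        also have "\<dots> = \<phi> S" using eq1[OF SI] S by simp
        finally show ?thesis by simp
      next
        case True
        define T where "T = S - {m}"
        have ST: "S = insert m T" and mT: "m \<notin> T" using True unfolding T_def by auto
        have TI: "T \<subseteq> I" using S unfolding T_def by auto
        have fT: "finite T" using fS unfolding T_def by simp
        have cT: "card T = i'" using S fS True Suc unfolding T_def by simp
        have xT: "\<And>k. k \<in> T \<Longrightarrow> x k \<in> carrier R" using TI xc by auto
        have pi: "\<And>k. k \<in> insert m T \<Longrightarrow> \<psi> (insert m T - {k}) \<in> carrier M" using pS ST by simp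
        have p2: "\<And>k. k \<in> T \<Longrightarrow> \<psi>2 (T - {k}) \<in> carrier M"
          using ch_minus1[OF fin chps2 TI cT] by auto
        have r2: "\<And>k. k \<in> T \<Longrightarrow> res2 M m \<psi> (T - {k}) \<in> carrier M"
          using p2 mT by (simp add: \<psi>_def res2_comb)
        have "dd R M (x(m:=y)) \<psi> S =
          pw M (card {j\<in>T. j<m}) (y \<odot>\<^bsub>M\<^esub> \<psi> T \<oplus>\<^bsub>M\<^esub> \<ominus>\<^bsub>M\<^esub> dd R M x (res2 M m \<psi>) T)"
          unfolding ST by (rule dd_high[where T=T and x=x and \<phi>=\<psi> and m=m and y=y, OF fT mT xT yc pi])
        also have "dd R M x (res2 M m \<psi>) T = dd R M x \<psi>2 T"
          using xT r2 mT p2 by (intro dd_cong) (auto simp: \<psi>_def res2_comb)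
        also have "\<dots> = \<theta> T" using eq2[OF TI cT] by simp
        also have "\<psi> T = \<psi>1 T" using mT by (simp add: \<psi>_def comb_low)
        finally have e: "dd R M (x(m:=y)) \<psi> S =
          pw M (card {j\<in>T. j<m}) (y \<odot>\<^bsub>M\<^esub> \<psi>1 T \<oplus>\<^bsub>M\<^esub> \<ominus>\<^bsub>M\<^esub> \<theta> T)" .
        have c1: "\<psi>1 T \<in> carrier M" using ch1' TI cT by (simp add: ch_def)
        have c2: "\<phi>2 T \<in> carrier M" using ch2 TI cT by (simp add: ch_def)
        have "y \<odot>\<^bsub>M\<^esub> \<psi>1 T \<oplus>\<^bsub>M\<^esub> \<ominus>\<^bsub>M\<^esub> \<theta> T = \<phi>2 T"
          unfolding \<theta>_def using c1 c2 yc
          by (simp add: M.minus_add M.minus_minus M.a_assoc[symmetric] M.r_neg)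
        hence "dd R M (x(m:=y)) \<psi> S = pw M (card {j\<in>T. j<m}) (\<phi>2 T)" using e by simp
        also have "\<dots> = \<phi> (insert m T)"
          unfolding \<phi>2_def res2_def using chp ST S by (simp add: ch_def)
        finally show ?thesis using ST by simp
      qed
    qed
    with ncb show False by simp
  qed
qed

lemma claim2:
  assumes fin: "finite I" and mI: "m \<notin> I" and xc: "\<And>k. k \<in> I \<Longrightarrow> x k \<in> carrier R"
    and ya: "y \<in> ann R M I x g" and nzg: "nz R M I x g"
  shows "nz R M (insert m I) (x(m:=y)) g"
proof -
  have yc: "y \<in> carrier R" using ya by (simp add: ann_def)
  have finI': "finite (insert m I)" using fin by simp
  obtain \<phi>1 where cz1: "cz R M I x g \<phi>1" and ncb1: "\<not> cb R M I x g \<phi>1" using nzg by (auto simp: nz_def)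
  have ch1: "ch M I g \<phi>1" using cz1 by (simp add: cz_def)
  have "cb R M I x g (\<lambda>S. y \<odot>\<^bsub>M\<^esub> \<phi>1 S)" using ya cz1 by (simp add: ann_def)
  then obtain \<psi> where chps: "ch M I (g - 1) \<psi>"
    and eqp: "\<And>S. S \<subseteq> I \<Longrightarrow> card S = g \<Longrightarrow> y \<odot>\<^bsub>M\<^esub> \<phi>1 S = dd R M x \<psi> S" by (auto simp: cb_def)
  define \<phi> where "\<phi> = comb M m \<phi>1 \<psi>"
  have chp: "ch M (insert m I) g \<phi>" unfolding \<phi>_def by (rule ch_comb[OF fin mI ch1 chps])
  have cz: "cz R M (insert m I) (x(m:=y)) g \<phi>"
    unfolding cz_def
  proof (intro conjI allI impI chp)
    fix T assume T: "T \<subseteq> insert m I \<and> card T = Suc g"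
    have fT: "finite T" using T finI' finite_subset by blast
    have pT: "\<And>k. k \<in> T \<Longrightarrow> \<phi> (T - {k}) \<in> carrier M" using ch_minus[OF finI' chp] T by auto
    show "dd R M (x(m:=y)) \<phi> T = \<zero>\<^bsub>M\<^esub>"
    proof (cases "m \<in> T")
      case False
      have TI: "T \<subseteq> I" using T False by auto
      have xT: "\<And>k. k \<in> T \<Longrightarrow> x k \<in> carrier R" using TI xc by auto
      have "dd R M (x(m:=y)) \<phi> T = dd R M x \<phi> T" by (rule dd_low[where T=T and x=x and \<phi>=\<phi> and m=m and y=y, OF False xT pT])
      also have "\<dots> = dd R M x \<phi>1 T"
        using xT pT False by (intro dd_cong) (auto simp: \<phi>_def comb_low)
      also have "\<dots> = \<zero>\<^bsub>M\<^esub>" using cz1 TI T by (simp add: cz_def)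
      finally show ?thesis .
    next
      case True
      define T' where "T' = T - {m}"
      have ST: "T = insert m T'" and mT: "m \<notin> T'" using True unfolding T'_def by auto
      have TI: "T' \<subseteq> I" using T unfolding T'_def by auto
      have fT': "finite T'" using fT unfolding T'_def by simp
      have cT: "card T' = g" using T fT True unfolding T'_def by simp
      have xT: "\<And>k. k \<in> T' \<Longrightarrow> x k \<in> carrier R" using TI xc by auto
      have pi: "\<And>k. k \<in> insert m T' \<Longrightarrow> \<phi> (insert m T' - {k}) \<in> carrier M" using pT ST by simp
      have p2: "\<And>k. k \<in> T' \<Longrightarrow> \<psi> (T' - {k}) \<in> carrier M"
        using ch_minus1[OF fin chps TI cT] by auto
      have r2: "\<And>k. k \<in> T' \<Longrightarrow> res2 M m \<phi> (T' - {k}) \<in> carrier M"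
        using p2 mT by (simp add: \<phi>_def res2_comb)
      have "dd R M (x(m:=y)) \<phi> T =
          pw M (card {j\<in>T'. j<m}) (y \<odot>\<^bsub>M\<^esub> \<phi> T' \<oplus>\<^bsub>M\<^esub> \<ominus>\<^bsub>M\<^esub> dd R M x (res2 M m \<phi>) T')"
        unfolding ST by (rule dd_high[where T=T' and x=x and \<phi>=\<phi> and m=m and y=y, OF fT' mT xT yc pi])
      also have "dd R M x (res2 M m \<phi>) T' = dd R M x \<psi> T'"
        using xT r2 mT p2 by (intro dd_cong) (auto simp: \<phi>_def res2_comb)
      also have "\<phi> T' = \<phi>1 T'" using mT by (simp add: \<phi>_def comb_low)
      also have "y \<odot>\<^bsub>M\<^esub> \<phi>1 T' = dd R M x \<psi> T'" using eqp[OF TI cT] .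
      finally have e: "dd R M (x(m:=y)) \<phi> T = pw M (card {j\<in>T'. j<m}) (dd R M x \<psi> T' \<oplus>\<^bsub>M\<^esub> \<ominus>\<^bsub>M\<^esub> dd R M x \<psi> T')" .
      show ?thesis unfolding e using dd_closed[where T=T' and x=x and \<phi>=\<psi>, OF xT p2] by (simp add: M.r_neg)
    qed
  qed
  moreover have "\<not> cb R M (insert m I) (x(m:=y)) g \<phi>"
  proof
    assume "cb R M (insert m I) (x(m:=y)) g \<phi>"
    then obtain \<psi>' where chq: "ch M (insert m I) (g - 1) \<psi>'"
      and eqq: "\<And>S. S \<subseteq> insert m I \<Longrightarrow> card S = g \<Longrightarrow> \<phi> S = dd R M (x(m:=y)) \<psi>' S"
      by (auto simp: cb_def)
    have "cb R M I x g \<phi>1"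
      unfolding cb_def
    proof (intro exI[of _ \<psi>'] conjI allI impI)
      show "ch M I (g - 1) \<psi>'" using chq by (rule ch_sub)
      fix S assume S: "S \<subseteq> I \<and> card S = g"
      have mS: "m \<notin> S" using S mI by auto
      have xS: "\<And>k. k \<in> S \<Longrightarrow> x k \<in> carrier R" using S xc by auto
      have pS: "\<And>k. k \<in> S \<Longrightarrow> \<psi>' (S - {k}) \<in> carrier M" using ch_minus1[OF fin ch_sub[OF chq]] S by auto
      have "\<phi>1 S = \<phi> S" using mS by (simp add: \<phi>_def comb_low)
      also have "\<dots> = dd R M (x(m:=y)) \<psi>' S" using eqq S by auto
      also have "\<dots> = dd R M x \<psi>' S" by (rule dd_low[where T=S and x=x and \<phi>=\<psi>' and m=m and y=y, OF mS xS pS])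
      finally show "\<phi>1 S = dd R M x \<psi>' S" .
    qed
    with ncb1 show False by simp
  qed
  ultimately show ?thesis by (auto simp: nz_def)
qed

lemma gr_insert:
  assumes fin: "finite I" and mI: "m \<notin> I" and xc: "\<And>k. k \<in> I \<Longrightarrow> x k \<in> carrier R"
    and yi: "y \<in> genideal R (x ` I)"
  shows "gr R M (insert m I) (x(m:=y)) = gr R M I x"
  unfolding gr_def
proof (rule inf_enat_eqI)
  have ya: "\<And>g. y \<in> ann R M I x g" using genideal_ann[of I x, OF fin xc] yi by blast
  have yc: "y \<in> carrier R" using ya[of 0] by (simp add: ann_def)
  fix g
  show "(\<forall>j<g. \<not> nz R M (insert m I) (x(m := y)) j) = (\<forall>j<g. \<not> nz R M I x j)"
    using claim1[where I=I and m=m and x=x and y=y, OF fin mI xc yc]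
      claim2[where I=I and m=m and x=x and y=y, OF fin mI xc ya] by blast
qed

end

context module
begin

lemma genideal_mono:
  assumes "S \<subseteq> T" "T \<subseteq> carrier R"
  shows "genideal R S \<subseteq> genideal R T"
  using genideal_minimal[OF genideal_ideal[OF assms(2)]] genideal_self[OF assms(2)] assms(1) by blast

lemma genideal_carrier:
  assumes "T \<subseteq> carrier R"
  shows "genideal R T \<subseteq> carrier R"
  using ideal.Icarr[OF genideal_ideal[OF assms]] by blast

lemma nz_cong:
  assumes fin: "finite I" and xx: "\<And>k. k \<in> I \<Longrightarrow> x k = x' k" and xc: "\<And>k. k \<in> I \<Longrightarrow> x k \<in> carrier R"
  shows "nz R M I x i = nz R M I x' i"
proof -
  have czeq: "cz R M I x i \<phi> = cz R M I x' i \<phi>" for \<phi>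
  proof -
    have "dd R M x \<phi> T = dd R M x' \<phi> T" if "ch M I i \<phi>" "T \<subseteq> I" "card T = Suc i" for T
      using that xx xc ch_minus[OF fin that(1) that(2,3)] by (intro dd_cong) auto
    thus ?thesis unfolding cz_def by auto
  qed
  have cbeq: "cb R M I x i \<phi> = cb R M I x' i \<phi>" for \<phi>
  proof -
    have "dd R M x \<psi> S = dd R M x' \<psi> S" if "ch M I (i - 1) \<psi>" "S \<subseteq> I" "card S = i" for \<psi> S
      using that xx xc ch_minus1[OF fin that(1) that(2,3)] by (intro dd_cong) auto
    thus ?thesis unfolding cb_def by metis
  qed
  show ?thesis unfolding nz_def using czeq cbeq by simp
qed

lemma gr_cong:
  assumes fin: "finite I" and xx: "\<And>k. k \<in> I \<Longrightarrow> x k = x' k" and xc: "\<And>k. k \<in> I \<Longrightarrow> x k \<in> carrier R"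
  shows "gr R M I x = gr R M I x'"
proof -
  have "nz R M I x = nz R M I x'"
    by (rule ext) (rule nz_cong[where x=x and x'=x', OF fin xx xc])
  thus ?thesis unfolding gr_def by simp
qed

lemma gr_extend:
  assumes "finite K"
  shows "finite I \<Longrightarrow> I \<inter> K = {} \<Longrightarrow> (\<And>k. k \<in> I \<Longrightarrow> z k \<in> carrier R) \<Longrightarrow>
     z ` K \<subseteq> genideal R (z ` I) \<Longrightarrow> gr R M (I \<union> K) z = gr R M I z"
  using assms
proof (induct K rule: finite_induct)
  case empty then show ?case by simp
next
  case (insert m K)
  have zI: "z ` I \<subseteq> carrier R" using insert.prems by auto
  have zK: "z ` K \<subseteq> carrier R" using insert.prems genideal_carrier[OF zI] by auto
  have zc: "\<And>k. k \<in> I \<union> K \<Longrightarrow> z k \<in> carrier R" using zI zK by auto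
  have mIK: "m \<notin> I \<union> K" using insert by auto
  have "z m \<in> genideal R (z ` I)" using insert.prems by auto
  also have "\<dots> \<subseteq> genideal R (z ` (I \<union> K))" by (rule genideal_mono) (use zI zK in auto)
  finally have zm: "z m \<in> genideal R (z ` (I \<union> K))" .
  have "gr R M (I \<union> insert m K) z = gr R M (insert m (I \<union> K)) (z(m := z m))" by simp
  also have "\<dots> = gr R M (I \<union> K) z"
    using gr_insert[where I="I \<union> K" and m=m and x=z and y="z m"] insert mIK zc zm by auto
  also have "\<dots> = gr R M I z" using insert by auto
  finally show ?case .
qed

lemma dd_reindex:
  assumes sm: "strict_mono (h::nat \<Rightarrow> nat)" and fT: "finite T"
    and zc: "\<And>k. k \<in> T \<Longrightarrow> z (h k) \<in> carrier R"
    and pc: "\<And>k. k \<in> T \<Longrightarrow> \<phi> (h ` (T - {k})) \<in> carrier M"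
  shows "dd R M z \<phi> (h ` T) = dd R M (\<lambda>k. z (h k)) (\<lambda>U. \<phi> (h ` U)) T"
proof -
  have inj: "inj h" using sm by (rule strict_mono_imp_inj_on)
  have c: "card {j \<in> h ` T. j < h k} = card {j\<in>T. j<k}" for k
  proof -
    have "{j \<in> h ` T. j < h k} = h ` {j\<in>T. j<k}" using strict_mono_less[OF sm] by auto
    thus ?thesis using inj by (simp add: card_image inj_on_subset)
  qed
  have d: "h ` T - {h k} = h ` (T - {k})" for k using inj by (auto simp: inj_eq)
  have injT: "inj_on h T" by (rule inj_on_subset[OF inj subset_UNIV])
  have tc: "(\<lambda>k. pw M (card {j \<in> h ` T. j < k}) (z k \<odot>\<^bsub>M\<^esub> \<phi> (h ` T - {k}))) \<in> h ` T \<rightarrow> carrier M"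
    using zc pc by (auto simp: d)
  have "dd R M z \<phi> (h ` T) = finsum M (\<lambda>k. pw M (card {j \<in> h ` T. j < h k}) (z (h k) \<odot>\<^bsub>M\<^esub> \<phi> (h ` T - {h k}))) T"
    unfolding dd_def by (rule M.finsum_reindex[OF tc injT])
  also have "\<dots> = dd R M (\<lambda>k. z (h k)) (\<lambda>U. \<phi> (h ` U)) T"
    unfolding dd_def c d by simp
  finally show ?thesis .
qed

lemma nz_shift:
  assumes sm: "strict_mono (h::nat \<Rightarrow> nat)" and gh: "\<And>k. g (h k) = k" and fin: "finite I"
    and zc: "\<And>k. k \<in> I \<Longrightarrow> z (h k) \<in> carrier R"
  shows "nz R M (h ` I) z i = nz R M I (\<lambda>k. z (h k)) i"
proof -
  have inj: "inj h" using sm by (rule strict_mono_imp_inj_on)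
  have hg: "h ` (g ` S) = S" if "S \<subseteq> h ` I" for S
  proof -
    have a: "\<forall>s\<in>S. h (g s) = s" using that gh by auto
    have "h ` (g ` S) = (\<lambda>s. h (g s)) ` S" by (simp add: image_image)
    also have "\<dots> = S" using a by (simp cong: image_cong)
    finally show ?thesis .
  qed
  have gI: "g ` S \<subseteq> I" if SS: "S \<subseteq> h ` I" for S
  proof
    fix a assume "a \<in> g ` S"
    then obtain s where "s \<in> S" "a = g s" by blast
    then obtain k where "k \<in> I" "s = h k" using SS by blast
    thus "a \<in> I" using \<open>a = g s\<close> gh by simp
  qed
  have gcard: "card (g ` S) = card S" if SS: "S \<subseteq> h ` I" for S
  proof -
    have "inj_on g S"
    proof (rule inj_onI)
      fix a b assume ab: "a \<in> S" "b \<in> S" "g a = g b"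
      then obtain ka kb where "a = h ka" "b = h kb" using SS by blast
      thus "a = b" using ab(3) gh by simp
    qed
    thus ?thesis by (rule card_image)
  qed
  have hcard: "\<And>U. card (h ` U) = card U" using inj by (simp add: card_image inj_on_subset)
  have gh2: "\<And>U. g ` (h ` U) = U" using gh by (simp add: image_image)
  have chA: "ch M I j (\<lambda>U. \<phi> (h ` U))" if "ch M (h ` I) j \<phi>" for j \<phi>
    unfolding ch_def
  proof (intro allI impI)
    fix U assume U: "U \<subseteq> I \<and> card U = j"
    hence "h ` U \<subseteq> h ` I" "card (h ` U) = j" using hcard by auto
    thus "\<phi> (h ` U) \<in> carrier M" using that by (simp add: ch_def)
  qed
  have chB: "ch M (h ` I) j (\<lambda>S. \<phi> (g ` S))" if "ch M I j \<phi>" for j \<phi>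
    unfolding ch_def
  proof (intro allI impI)
    fix S assume S: "S \<subseteq> h ` I \<and> card S = j"
    hence "g ` S \<subseteq> I" "card (g ` S) = j" using gI gcard by auto
    thus "\<phi> (g ` S) \<in> carrier M" using that by (simp add: ch_def)
  qed
  have ddeq: "dd R M z \<phi> (h ` U) = dd R M (\<lambda>k. z (h k)) (\<lambda>U. \<phi> (h ` U)) U"
    if "ch M (h ` I) j \<phi>" "U \<subseteq> I" "card U = Suc j" for \<phi> j U
  proof -
    have fU: "finite U" using that fin finite_subset by blast
    show ?thesis
    proof (rule dd_reindex[OF sm fU])
      show "\<And>k. k \<in> U \<Longrightarrow> z (h k) \<in> carrier R" using zc that by auto
      fix k assume k: "k \<in> U"
      have "h ` (U - {k}) \<subseteq> h ` I" using that by auto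
      moreover have "card (h ` (U - {k})) = j" using hcard fU k that by simp
      ultimately show "\<phi> (h ` (U - {k})) \<in> carrier M" using that(1) by (simp add: ch_def)
    qed
  qed
  have ddeq1: "dd R M z \<phi> (h ` U) = dd R M (\<lambda>k. z (h k)) (\<lambda>U. \<phi> (h ` U)) U"
    if "ch M (h ` I) (i - 1) \<phi>" "U \<subseteq> I" "card U = i" for \<phi> U
  proof (cases i)
    case 0
    hence "U = {}" using that fin finite_subset by (metis card_0_eq)
    thus ?thesis by simp
  next
    case (Suc j)
    have c1: "ch M (h ` I) j \<phi>" using that(1) Suc by simp
    have c2: "card U = Suc j" using that(3) Suc by simp
    show ?thesis by (rule ddeq[OF c1 that(2) c2])
  qed
  show ?thesis
  proof
    assume "nz R M (h ` I) z i"
    then obtain \<phi> where cz: "cz R M (h ` I) z i \<phi>" and ncb: "\<not> cb R M (h ` I) z i \<phi>" by (auto simp: nz_def)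
    have chp: "ch M (h ` I) i \<phi>" using cz by (simp add: cz_def)
    have "cz R M I (\<lambda>k. z (h k)) i (\<lambda>U. \<phi> (h ` U))"
      unfolding cz_def
    proof (intro conjI allI impI)
      show "ch M I i (\<lambda>U. \<phi> (h ` U))" using chA[OF chp] .
      fix T assume T: "T \<subseteq> I \<and> card T = Suc i"
      have "dd R M (\<lambda>k. z (h k)) (\<lambda>U. \<phi> (h ` U)) T = dd R M z \<phi> (h ` T)" using ddeq[OF chp] T by simp
      also have "\<dots> = \<zero>\<^bsub>M\<^esub>"
      proof -
        have "h ` T \<subseteq> h ` I" "card (h ` T) = Suc i" using T hcard by auto
        thus ?thesis using cz by (simp add: cz_def)
      qed
      finally show "dd R M (\<lambda>k. z (h k)) (\<lambda>U. \<phi> (h ` U)) T = \<zero>\<^bsub>M\<^esub>" .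
    qed
    moreover have "\<not> cb R M I (\<lambda>k. z (h k)) i (\<lambda>U. \<phi> (h ` U))"
    proof
      assume "cb R M I (\<lambda>k. z (h k)) i (\<lambda>U. \<phi> (h ` U))"
      then obtain \<psi>' where ch': "ch M I (i - 1) \<psi>'"
        and eq': "\<And>U. U \<subseteq> I \<Longrightarrow> card U = i \<Longrightarrow> \<phi> (h ` U) = dd R M (\<lambda>k. z (h k)) \<psi>' U"
        by (auto simp: cb_def)
      define \<psi> where "\<psi> = (\<lambda>S. \<psi>' (g ` S))"
      have chps: "ch M (h ` I) (i - 1) \<psi>" unfolding \<psi>_def by (rule chB[OF ch'])
      have "cb R M (h ` I) z i \<phi>"
        unfolding cb_def
      proof (intro exI[of _ \<psi>] conjI allI impI chps)
        fix S assume S: "S \<subseteq> h ` I \<and> card S = i"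
        define U where "U = g ` S"
        have SU: "S = h ` U" unfolding U_def using hg S by simp
        have UI: "U \<subseteq> I" "card U = i" unfolding U_def using gI gcard S by auto
        have "\<phi> S = dd R M (\<lambda>k. z (h k)) \<psi>' U" using eq'[OF UI] SU by simp
        also have "\<dots> = dd R M (\<lambda>k. z (h k)) (\<lambda>U. \<psi> (h ` U)) U"
          unfolding \<psi>_def gh2 by simp
        also have "\<dots> = dd R M z \<psi> S" using ddeq1[OF chps UI] SU by simp
        finally show "\<phi> S = dd R M z \<psi> S" .
      qed
      with ncb show False by simp
    qed
    ultimately show "nz R M I (\<lambda>k. z (h k)) i" by (auto simp: nz_def)
  next
    assume "nz R M I (\<lambda>k. z (h k)) i"
    then obtain \<phi>' where cz: "cz R M I (\<lambda>k. z (h k)) i \<phi>'" and ncb: "\<not> cb R M I (\<lambda>k. z (h k)) i \<phi>'"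
      by (auto simp: nz_def)
    have chp: "ch M I i \<phi>'" using cz by (simp add: cz_def)
    define \<phi> where "\<phi> = (\<lambda>S. \<phi>' (g ` S))"
    have chq: "ch M (h ` I) i \<phi>" unfolding \<phi>_def by (rule chB[OF chp])
    have ph: "\<And>U. \<phi> (h ` U) = \<phi>' U" unfolding \<phi>_def gh2 by simp
    have "cz R M (h ` I) z i \<phi>"
      unfolding cz_def
    proof (intro conjI allI impI chq)
      fix T assume T: "T \<subseteq> h ` I \<and> card T = Suc i"
      define U where "U = g ` T"
      have SU: "T = h ` U" unfolding U_def using hg T by simp
      have UI: "U \<subseteq> I" "card U = Suc i" unfolding U_def using gI gcard T by auto
      have "dd R M z \<phi> T = dd R M (\<lambda>k. z (h k)) (\<lambda>U. \<phi> (h ` U)) U" using ddeq[OF chq UI] SU by simp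
      also have "\<dots> = \<zero>\<^bsub>M\<^esub>" unfolding ph using cz UI by (simp add: cz_def)
      finally show "dd R M z \<phi> T = \<zero>\<^bsub>M\<^esub>" .
    qed
    moreover have "\<not> cb R M (h ` I) z i \<phi>"
    proof
      assume "cb R M (h ` I) z i \<phi>"
      then obtain \<psi> where chps: "ch M (h ` I) (i - 1) \<psi>"
        and eq: "\<And>S. S \<subseteq> h ` I \<Longrightarrow> card S = i \<Longrightarrow> \<phi> S = dd R M z \<psi> S"
        by (auto simp: cb_def)
      have "cb R M I (\<lambda>k. z (h k)) i \<phi>'"
        unfolding cb_def
      proof (intro exI[of _ "\<lambda>U. \<psi> (h ` U)"] conjI allI impI)
        show "ch M I (i - 1) (\<lambda>U. \<psi> (h ` U))" by (rule chA[OF chps])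
        fix U assume U: "U \<subseteq> I \<and> card U = i"
        have "\<phi>' U = \<phi> (h ` U)" using ph by simp
        also have "\<dots> = dd R M z \<psi> (h ` U)"
        proof -
          have "h ` U \<subseteq> h ` I" "card (h ` U) = i" using U hcard by auto
          thus ?thesis using eq by blast
        qed
        also have "\<dots> = dd R M (\<lambda>k. z (h k)) (\<lambda>U. \<psi> (h ` U)) U" using ddeq1[OF chps] U by simp
        finally show "\<phi>' U = dd R M (\<lambda>k. z (h k)) (\<lambda>U. \<psi> (h ` U)) U" .
      qed
      with ncb show False by simp
    qed
    ultimately show "nz R M (h ` I) z i" by (auto simp: nz_def)
  qed
qed

lemma gr_shift:
  assumes fin: "finite I" and zc: "\<And>k. k \<in> I \<Longrightarrow> z (k + n) \<in> carrier R"
  shows "gr R M ((\<lambda>k. k + n) ` I) z = gr R M I (\<lambda>k. z (k + n))"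
proof -
  have sm: "strict_mono (\<lambda>k::nat. k + n)" by (simp add: strict_mono_def)
  have gh: "\<And>k. (\<lambda>k. k - n) ((\<lambda>k. k + n) k) = k" by simp
  have "nz R M ((\<lambda>k. k + n) ` I) z = nz R M I (\<lambda>k. z (k + n))"
    by (rule ext) (rule nz_shift[where h="\<lambda>k. k + n" and z=z, OF sm gh fin zc])
  thus ?thesis unfolding gr_def by simp
qed

end

lemma inf_enat_mono:
  assumes "\<And>g. (\<forall>j<g. \<not> P j) \<Longrightarrow> (\<forall>j<g. \<not> Q j)"
  shows "(INF i\<in>{i. P i}. enat i) \<le> (INF i\<in>{i. Q i}. enat i)"
proof (rule INF_greatest)
  fix i assume Qi: "i \<in> {i. Q i}"
  show "(INF i\<in>{i. P i}. enat i) \<le> enat i"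
  proof (rule ccontr)
    assume "\<not> (INF i\<in>{i. P i}. enat i) \<le> enat i"
    hence lt: "enat i < (INF i\<in>{i. P i}. enat i)" by simp
    have "\<forall>j<Suc i. \<not> P j"
    proof (intro allI impI notI)
      fix j assume "j < Suc i" "P j"
      hence "(INF i\<in>{i. P i}. enat i) \<le> enat j" by (simp add: INF_lower)
      with lt have "enat i < enat j" by (rule less_le_trans)
      with \<open>j < Suc i\<close> show False by simp
    qed
    hence "\<forall>j<Suc i. \<not> Q j" by (rule assms)
    with Qi show False by simp
  qed
qed

context module
begin

lemma gr_insert_ge:
  assumes fin: "finite I" and mI: "m \<notin> I" and xc: "\<And>k. k \<in> I \<Longrightarrow> x k \<in> carrier R"
    and yc: "y \<in> carrier R"
  shows "gr R M I x \<le> gr R M (insert m I) (x(m:=y))"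
  unfolding gr_def
  by (rule inf_enat_mono) (use claim1[where I=I and m=m and x=x and y=y, OF fin mI xc yc] in blast)

lemma gr_mono_extend:
  assumes "finite K"
  shows "finite I \<Longrightarrow> I \<inter> K = {} \<Longrightarrow> (\<And>k. k \<in> I \<union> K \<Longrightarrow> z k \<in> carrier R) \<Longrightarrow>
     gr R M I z \<le> gr R M (I \<union> K) z"
  using assms
proof (induct K rule: finite_induct)
  case empty then show ?case by simp
next
  case (insert m K)
  have zc: "\<And>k. k \<in> I \<union> K \<Longrightarrow> z k \<in> carrier R" using insert.prems by auto
  have mIK: "m \<notin> I \<union> K" using insert by auto
  have "gr R M I z \<le> gr R M (I \<union> K) z" using insert zc by auto
  also have "\<dots> \<le> gr R M (insert m (I \<union> K)) (z(m := z m))"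
    using gr_insert_ge[where I="I \<union> K" and m=m and x=z and y="z m"] insert mIK zc by auto
  also have "\<dots> = gr R M (I \<union> insert m K) z" by simp
  finally show ?case .
qed

lemma koszul_d_eq: "koszul_d R M xs = dd R M (\<lambda>k. xs ! k)"
  by (intro ext) (simp add: koszul_d_def dd_def pw_def)

lemma kgs_gr: "koszul_grade_seq R xs M = gr R M {..<length xs} (\<lambda>k. xs ! k)"
proof -
  have S0: "(S \<subseteq> {..<length xs} \<and> card S = 0) = (S = {})" for S
  proof
    assume a: "S \<subseteq> {..<length xs} \<and> card S = 0"
    hence "finite S" using finite_subset by blast
    thus "S = {}" using a by simp
  qed simp
  have cz: "koszul_cocycle R M xs i \<phi> = cz R M {..<length xs} (\<lambda>k. xs ! k) i \<phi>" for i \<phi>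
    by (simp add: koszul_cocycle_def cz_def koszul_cochain_def ch_def koszul_d_eq)
  have cb: "koszul_coboundary R M xs i \<phi> = cb R M {..<length xs} (\<lambda>k. xs ! k) i \<phi>" for i \<phi>
  proof (cases "i = 0")
    case True
    have "cb R M {..<length xs} (\<lambda>k. xs ! k) i \<phi> = (\<phi> {} = \<zero>\<^bsub>M\<^esub>)"
    proof
      assume "cb R M {..<length xs} (\<lambda>k. xs ! k) i \<phi>"
      thus "\<phi> {} = \<zero>\<^bsub>M\<^esub>" using True by (auto simp: cb_def)
    next
      assume "\<phi> {} = \<zero>\<^bsub>M\<^esub>"
      thus "cb R M {..<length xs} (\<lambda>k. xs ! k) i \<phi>" using True S0
        by (auto simp: cb_def ch_def intro!: exI[of _ "\<lambda>S. \<zero>\<^bsub>M\<^esub>"])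
    qed
    moreover have "koszul_coboundary R M xs i \<phi> = (\<phi> {} = \<zero>\<^bsub>M\<^esub>)"
      using True S0 by (auto simp: koszul_coboundary_def)
    ultimately show ?thesis by simp
  next
    case False
    thus ?thesis by (simp add: koszul_coboundary_def cb_def koszul_cochain_def ch_def koszul_d_eq)
  qed
  have "koszul_cohom_nonzero R M xs = nz R M {..<length xs} (\<lambda>k. xs ! k)"
    by (intro ext) (simp add: koszul_cohom_nonzero_def nz_def cz cb)
  thus ?thesis by (simp add: koszul_grade_seq_def gr_def)
qed

lemma kgs_le:
  assumes xc: "set xs \<subseteq> carrier R" and yc: "set ys \<subseteq> carrier R"
    and sub: "genideal R (set xs) \<subseteq> genideal R (set ys)"
  shows "koszul_grade_seq R xs M \<le> koszul_grade_seq R ys M"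
proof -
  define n where "n = length xs"
  define p where "p = length ys"
  define Z where "Z = (\<lambda>k. if k < n then xs ! k else ys ! (k - n))"
  have Zx: "Z ` {..<n} = set xs" unfolding Z_def n_def by (auto simp: set_conv_nth)
  have Zy: "Z ` {n..<n+p} = set ys"
  proof -
    have "Z ` {n..<n+p} = (\<lambda>k. ys ! k) ` {..<p}"
    proof
      show "Z ` {n..<n+p} \<subseteq> (\<lambda>k. ys ! k) ` {..<p}"
      proof
        fix a assume "a \<in> Z ` {n..<n+p}"
        then obtain k where k: "k \<in> {n..<n+p}" "a = Z k" by blast
        hence "a = ys ! (k - n)" "k - n < p" unfolding Z_def by auto
        thus "a \<in> (\<lambda>k. ys ! k) ` {..<p}" by auto
      qed
      show "(\<lambda>k. ys ! k) ` {..<p} \<subseteq> Z ` {n..<n+p}"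
      proof
        fix a assume "a \<in> (\<lambda>k. ys ! k) ` {..<p}"
        then obtain k where k: "k < p" "a = ys ! k" by blast
        hence "k + n \<in> {n..<n+p}" "Z (k + n) = a" unfolding Z_def by auto
        thus "a \<in> Z ` {n..<n+p}" by (metis image_eqI)
      qed
    qed
    also have "\<dots> = set ys" unfolding p_def by (auto simp: set_conv_nth)
    finally show ?thesis .
  qed
  have Zc: "\<And>k. k \<in> {..<n} \<union> {n..<n+p} \<Longrightarrow> Z k \<in> carrier R"
    using Zx Zy xc yc by blast
  have "koszul_grade_seq R xs M = gr R M {..<n} (\<lambda>k. xs ! k)" unfolding n_def by (rule kgs_gr)
  also have "\<dots> = gr R M {..<n} Z"
    by (rule gr_cong) (use xc in \<open>auto simp: Z_def n_def\<close>)
  also have "\<dots> \<le> gr R M ({..<n} \<union> {n..<n+p}) Z"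
    by (rule gr_mono_extend) (use Zc in auto)
  also have "\<dots> = gr R M ({n..<n+p} \<union> {..<n}) Z" by (simp add: Un_commute)
  also have "\<dots> = gr R M {n..<n+p} Z"
  proof (rule gr_extend)
    show "\<And>k. k \<in> {n..<n + p} \<Longrightarrow> Z k \<in> carrier R" using Zc by auto
    have "Z ` {..<n} \<subseteq> genideal R (Z ` {..<n})" using genideal_self[of "Z ` {..<n}"] Zx xc by simp
    thus "Z ` {..<n} \<subseteq> genideal R (Z ` {n..<n + p})" using sub Zx Zy by simp
  qed auto
  also have "\<dots> = gr R M ((\<lambda>k. k + n) ` {..<p}) Z"
  proof -
    have "(\<lambda>k. k + n) ` {..<p} = {n..<n+p}"
      using image_add_atLeastLessThan'[of n 0 p] by (simp add: lessThan_atLeast0 add.commute)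
    thus ?thesis by simp
  qed
  also have "\<dots> = gr R M {..<p} (\<lambda>k. Z (k + n))"
    by (rule gr_shift) (use Zc in auto)
  also have "\<dots> = gr R M {..<p} (\<lambda>k. ys ! k)"
  proof (rule gr_cong)
    show "\<And>k. k \<in> {..<p} \<Longrightarrow> Z (k + n) = ys ! k" unfolding Z_def by simp
    show "\<And>k. k \<in> {..<p} \<Longrightarrow> Z (k + n) \<in> carrier R" using Zc by auto
  qed simp
  also have "\<dots> = koszul_grade_seq R ys M" unfolding p_def by (rule kgs_gr[symmetric])
  finally show ?thesis .
qed

lemma kgs_indep:
  assumes "set xs \<subseteq> carrier R" "set ys \<subseteq> carrier R" "genideal R (set xs) = genideal R (set ys)"
  shows "koszul_grade_seq R xs M = koszul_grade_seq R ys M"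
  using kgs_le[OF assms(1,2)] kgs_le[OF assms(2,1)] assms(3) by (simp add: antisym)

lemma kgrade_fg_eq:
  assumes "set xs \<subseteq> carrier R" "genideal R (set xs) = b"
  shows "kgrade_fg R b M = koszul_grade_seq R xs M"
proof -
  define ys where "ys = (SOME xs. set xs \<subseteq> carrier R \<and> genideal R (set xs) = b)"
  have "set ys \<subseteq> carrier R \<and> genideal R (set ys) = b"
    unfolding ys_def by (rule someI[of _ xs]) (use assms in auto)
  hence "koszul_grade_seq R ys M = koszul_grade_seq R xs M"
    using kgs_indep[of ys xs] assms by simp
  thus ?thesis unfolding kgrade_fg_def ys_def[symmetric] .
qed

lemma kgrade_fg_le:
  assumes "set xs \<subseteq> carrier R" "set ys \<subseteq> carrier R" "genideal R (set xs) \<subseteq> genideal R (set ys)"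
  shows "kgrade_fg R (genideal R (set xs)) M \<le> kgrade_fg R (genideal R (set ys)) M"
  using kgrade_fg_eq[OF assms(1) refl] kgrade_fg_eq[OF assms(2) refl] kgs_le[OF assms] by simp

end

lemma ring_module_simps[simp]:
  "carrier (ring_module R) = carrier R"
  "a \<oplus>\<^bsub>ring_module R\<^esub> b = a \<oplus>\<^bsub>R\<^esub> b"
  "\<zero>\<^bsub>ring_module R\<^esub> = \<zero>\<^bsub>R\<^esub>"
  "a \<odot>\<^bsub>ring_module R\<^esub> b = a \<otimes>\<^bsub>R\<^esub> b"
  "a \<otimes>\<^bsub>ring_module R\<^esub> b = a \<otimes>\<^bsub>R\<^esub> b"
  by (simp_all add: ring_module_def)


lemma cring_module_self:
  assumes "cring R"
  shows "module R (ring_module R)"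
proof -
  interpret cring R by fact
  show ?thesis
  proof (rule moduleI)
    show "cring R" by fact
    show "abelian_group (ring_module R)"
      by (rule abelian_groupI) (auto simp: a_ac intro: l_neg)
  qed (auto simp: l_distr r_distr m_assoc)
qed

locale amal =
  fixes A :: "'a ring" and B :: "'b ring" and f :: "'a \<Rightarrow> 'b" and J :: "'b set"
  assumes cA: "cring A" and cB: "cring B" and hom: "f \<in> ring_hom A B" and idl: "ideal J B"

sublocale amal \<subseteq> A: cring A by (rule cA)
sublocale amal \<subseteq> B: cring B by (rule cB)
sublocale amal \<subseteq> J: ideal J B by (rule idl)

context amal
begin

lemma f_closed[simp]: "a \<in> carrier A \<Longrightarrow> f a \<in> carrier B" using hom by (rule ring_hom_closed)
lemma f_add[simp]: "a \<in> carrier A \<Longrightarrow> b \<in> carrier A \<Longrightarrow> f (a \<oplus>\<^bsub>A\<^esub> b) = f a \<oplus>\<^bsub>B\<^esub> f b"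
  using hom by (rule ring_hom_add)
lemma f_mult[simp]: "a \<in> carrier A \<Longrightarrow> b \<in> carrier A \<Longrightarrow> f (a \<otimes>\<^bsub>A\<^esub> b) = f a \<otimes>\<^bsub>B\<^esub> f b"
  using hom by (rule ring_hom_mult)
lemma f_one[simp]: "f \<one>\<^bsub>A\<^esub> = \<one>\<^bsub>B\<^esub>" using hom by (rule ring_hom_one)
lemma f_zero[simp]: "f \<zero>\<^bsub>A\<^esub> = \<zero>\<^bsub>B\<^esub>"
  using ring_hom_zero[OF hom A.ring_axioms B.ring_axioms] .
lemma f_neg[simp]: "a \<in> carrier A \<Longrightarrow> f (\<ominus>\<^bsub>A\<^esub> a) = \<ominus>\<^bsub>B\<^esub> f a"
proof -
  assume a: "a \<in> carrier A"
  have "f (\<ominus>\<^bsub>A\<^esub> a) \<oplus>\<^bsub>B\<^esub> f a = \<zero>\<^bsub>B\<^esub>" using a by (simp add: f_add[symmetric] A.l_neg)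
  thus ?thesis using a by (metis A.a_inv_closed B.minus_equality f_closed)
qed

lemma J_carr: "j \<in> J \<Longrightarrow> j \<in> carrier B" by (rule J.Icarr)

abbreviation "AJ \<equiv> amalg A B f J"

lemma AJ_simps[simp]:
  "u \<otimes>\<^bsub>AJ\<^esub> v = (fst u \<otimes>\<^bsub>A\<^esub> fst v, snd u \<otimes>\<^bsub>B\<^esub> snd v)"
  "u \<oplus>\<^bsub>AJ\<^esub> v = (fst u \<oplus>\<^bsub>A\<^esub> fst v, snd u \<oplus>\<^bsub>B\<^esub> snd v)"
  "\<zero>\<^bsub>AJ\<^esub> = (\<zero>\<^bsub>A\<^esub>, \<zero>\<^bsub>B\<^esub>)"
  "\<one>\<^bsub>AJ\<^esub> = (\<one>\<^bsub>A\<^esub>, \<one>\<^bsub>B\<^esub>)"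
  by (simp_all add: amalg_def)

lemma AJ_carrier: "u \<in> carrier AJ \<longleftrightarrow> fst u \<in> carrier A \<and> snd u \<in> carrier B \<and> snd u \<ominus>\<^bsub>B\<^esub> f (fst u) \<in> J"
proof
  assume "u \<in> carrier AJ"
  then obtain a j where u: "u = (a, f a \<oplus>\<^bsub>B\<^esub> j)" "a \<in> carrier A" "j \<in> J" by (auto simp: amalg_def)
  have jc: "j \<in> carrier B" using u(3) by (rule J_carr)
  have "f a \<oplus>\<^bsub>B\<^esub> j \<ominus>\<^bsub>B\<^esub> f a = j" using u(2) jc by (simp add: a_minus_def B.a_ac B.r_neg B.r_neg2)
  thus "fst u \<in> carrier A \<and> snd u \<in> carrier B \<and> snd u \<ominus>\<^bsub>B\<^esub> f (fst u) \<in> J" using u jc by simp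
next
  assume a: "fst u \<in> carrier A \<and> snd u \<in> carrier B \<and> snd u \<ominus>\<^bsub>B\<^esub> f (fst u) \<in> J"
  have "snd u = f (fst u) \<oplus>\<^bsub>B\<^esub> (snd u \<ominus>\<^bsub>B\<^esub> f (fst u))"
    using a by (simp add: a_minus_def B.a_ac B.r_neg B.r_neg2 B.l_neg)
  hence "u = (fst u, f (fst u) \<oplus>\<^bsub>B\<^esub> (snd u \<ominus>\<^bsub>B\<^esub> f (fst u)))" by (metis prod.collapse)
  thus "u \<in> carrier AJ" using a unfolding amalg_def by auto
qed

lemma sig_carrier: "a \<in> carrier A \<Longrightarrow> j \<in> J \<Longrightarrow> (a, f a \<oplus>\<^bsub>B\<^esub> j) \<in> carrier AJ"
  by (auto simp: amalg_def)

lemma AJ_cases: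
  assumes "u \<in> carrier AJ"
  obtains a j where "u = (a, f a \<oplus>\<^bsub>B\<^esub> j)" "a \<in> carrier A" "j \<in> J"
  using assms by (auto simp: amalg_def)

lemma AJ_cring: "cring AJ"
proof (rule cringI)
  show "abelian_group AJ"
  proof (rule abelian_groupI)
    fix u v assume "u \<in> carrier AJ" "v \<in> carrier AJ"
    then obtain a j b k where u: "u = (a, f a \<oplus>\<^bsub>B\<^esub> j)" "a \<in> carrier A" "j \<in> J"
      and v: "v = (b, f b \<oplus>\<^bsub>B\<^esub> k)" "b \<in> carrier A" "k \<in> J" by (metis AJ_cases)
    have "u \<oplus>\<^bsub>AJ\<^esub> v = (a \<oplus>\<^bsub>A\<^esub> b, f (a \<oplus>\<^bsub>A\<^esub> b) \<oplus>\<^bsub>B\<^esub> (j \<oplus>\<^bsub>B\<^esub> k))"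
      using u v J_carr[OF u(3)] J_carr[OF v(3)] by (simp add: B.a_ac)
    moreover have "(a \<oplus>\<^bsub>A\<^esub> b, f (a \<oplus>\<^bsub>A\<^esub> b) \<oplus>\<^bsub>B\<^esub> (j \<oplus>\<^bsub>B\<^esub> k)) \<in> carrier AJ"
      by (rule sig_carrier) (use u v in auto)
    ultimately show "u \<oplus>\<^bsub>AJ\<^esub> v \<in> carrier AJ" by (simp only:)
  next
    show "\<zero>\<^bsub>AJ\<^esub> \<in> carrier AJ" using sig_carrier[of "\<zero>\<^bsub>A\<^esub>" "\<zero>\<^bsub>B\<^esub>"] by simp
  next
    fix u v w assume "u \<in> carrier AJ" "v \<in> carrier AJ" "w \<in> carrier AJ"
    thus "u \<oplus>\<^bsub>AJ\<^esub> v \<oplus>\<^bsub>AJ\<^esub> w = u \<oplus>\<^bsub>AJ\<^esub> (v \<oplus>\<^bsub>AJ\<^esub> w)"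
      by (auto simp: AJ_carrier A.a_assoc B.a_assoc)
  next
    fix u v assume "u \<in> carrier AJ" "v \<in> carrier AJ"
    thus "u \<oplus>\<^bsub>AJ\<^esub> v = v \<oplus>\<^bsub>AJ\<^esub> u" by (auto simp: AJ_carrier A.a_comm B.a_comm)
  next
    fix u assume "u \<in> carrier AJ"
    thus "\<zero>\<^bsub>AJ\<^esub> \<oplus>\<^bsub>AJ\<^esub> u = u" by (auto simp: AJ_carrier)
  next
    fix u assume "u \<in> carrier AJ"
    then obtain a j where u: "u = (a, f a \<oplus>\<^bsub>B\<^esub> j)" "a \<in> carrier A" "j \<in> J" by (metis AJ_cases)
    have jc: "j \<in> carrier B" using u(3) by (rule J_carr)
    have "(\<ominus>\<^bsub>A\<^esub> a, f (\<ominus>\<^bsub>A\<^esub> a) \<oplus>\<^bsub>B\<^esub> \<ominus>\<^bsub>B\<^esub> j) \<in> carrier AJ"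
      using u by (intro sig_carrier) auto
    moreover have "(\<ominus>\<^bsub>A\<^esub> a, f (\<ominus>\<^bsub>A\<^esub> a) \<oplus>\<^bsub>B\<^esub> \<ominus>\<^bsub>B\<^esub> j) \<oplus>\<^bsub>AJ\<^esub> u = \<zero>\<^bsub>AJ\<^esub>"
      using u jc by (simp add: A.l_neg B.minus_add[symmetric] B.l_neg)
    ultimately show "\<exists>y\<in>carrier AJ. y \<oplus>\<^bsub>AJ\<^esub> u = \<zero>\<^bsub>AJ\<^esub>" by blast
  qed
next
  show "comm_monoid AJ"
  proof (rule comm_monoidI)
    fix u v assume "u \<in> carrier AJ" "v \<in> carrier AJ"
    then obtain a j b k where u: "u = (a, f a \<oplus>\<^bsub>B\<^esub> j)" "a \<in> carrier A" "j \<in> J"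
      and v: "v = (b, f b \<oplus>\<^bsub>B\<^esub> k)" "b \<in> carrier A" "k \<in> J" by (metis AJ_cases)
    have jc: "j \<in> carrier B" and kc: "k \<in> carrier B" using u v J_carr by auto
    have "u \<otimes>\<^bsub>AJ\<^esub> v = (a \<otimes>\<^bsub>A\<^esub> b, f (a \<otimes>\<^bsub>A\<^esub> b) \<oplus>\<^bsub>B\<^esub> (f a \<otimes>\<^bsub>B\<^esub> k \<oplus>\<^bsub>B\<^esub> j \<otimes>\<^bsub>B\<^esub> (f b \<oplus>\<^bsub>B\<^esub> k)))"
      using u v jc kc by (simp add: B.l_distr B.r_distr B.a_ac)
    moreover have "f a \<otimes>\<^bsub>B\<^esub> k \<oplus>\<^bsub>B\<^esub> j \<otimes>\<^bsub>B\<^esub> (f b \<oplus>\<^bsub>B\<^esub> k) \<in> J"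
      using u v jc kc by (intro J.a_closed J.I_l_closed J.I_r_closed) auto
    moreover have "(a \<otimes>\<^bsub>A\<^esub> b, f (a \<otimes>\<^bsub>A\<^esub> b) \<oplus>\<^bsub>B\<^esub> (f a \<otimes>\<^bsub>B\<^esub> k \<oplus>\<^bsub>B\<^esub> j \<otimes>\<^bsub>B\<^esub> (f b \<oplus>\<^bsub>B\<^esub> k))) \<in> carrier AJ"
      by (rule sig_carrier) (use u v calculation in auto)
    ultimately show "u \<otimes>\<^bsub>AJ\<^esub> v \<in> carrier AJ" by (simp only:)
  next
    show "\<one>\<^bsub>AJ\<^esub> \<in> carrier AJ" using sig_carrier[of "\<one>\<^bsub>A\<^esub>" "\<zero>\<^bsub>B\<^esub>"] by simp
  next
    fix u v w assume "u \<in> carrier AJ" "v \<in> carrier AJ" "w \<in> carrier AJ"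
    thus "u \<otimes>\<^bsub>AJ\<^esub> v \<otimes>\<^bsub>AJ\<^esub> w = u \<otimes>\<^bsub>AJ\<^esub> (v \<otimes>\<^bsub>AJ\<^esub> w)"
      by (auto simp: AJ_carrier A.m_assoc B.m_assoc)
  next
    fix u assume "u \<in> carrier AJ"
    thus "\<one>\<^bsub>AJ\<^esub> \<otimes>\<^bsub>AJ\<^esub> u = u" by (auto simp: AJ_carrier)
  next
    fix u v assume "u \<in> carrier AJ" "v \<in> carrier AJ"
    thus "u \<otimes>\<^bsub>AJ\<^esub> v = v \<otimes>\<^bsub>AJ\<^esub> u" by (auto simp: AJ_carrier A.m_comm B.m_comm)
  qed
next
  fix u v w assume "u \<in> carrier AJ" "v \<in> carrier AJ" "w \<in> carrier AJ"
  thus "(u \<oplus>\<^bsub>AJ\<^esub> v) \<otimes>\<^bsub>AJ\<^esub> w = u \<otimes>\<^bsub>AJ\<^esub> w \<oplus>\<^bsub>AJ\<^esub> v \<otimes>\<^bsub>AJ\<^esub> w"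
    by (auto simp: AJ_carrier A.l_distr B.l_distr)
qed

lemma iota_hom: "(\<lambda>a. (a, f a)) \<in> ring_hom A AJ"
proof (rule ring_hom_memI)
  fix a assume "a \<in> carrier A"
  thus "(a, f a) \<in> carrier AJ" using sig_carrier[of a "\<zero>\<^bsub>B\<^esub>"] by simp
qed auto

lemma MJ_simps[simp]:
  "carrier (ideal_module A B f J) = J"
  "a \<oplus>\<^bsub>ideal_module A B f J\<^esub> b = a \<oplus>\<^bsub>B\<^esub> b"
  "\<zero>\<^bsub>ideal_module A B f J\<^esub> = \<zero>\<^bsub>B\<^esub>"
  "r \<odot>\<^bsub>ideal_module A B f J\<^esub> b = f r \<otimes>\<^bsub>B\<^esub> b"
  by (simp_all add: ideal_module_def)

lemma MJ_module: "module A (ideal_module A B f J)"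
proof (rule moduleI)
  show "cring A" by (rule cA)
  show "abelian_group (ideal_module A B f J)"
  proof (rule abelian_groupI)
    fix x assume "x \<in> carrier (ideal_module A B f J)"
    hence x: "x \<in> J" by simp
    hence "\<ominus>\<^bsub>B\<^esub> x \<in> J" "\<ominus>\<^bsub>B\<^esub> x \<oplus>\<^bsub>B\<^esub> x = \<zero>\<^bsub>B\<^esub>" using J_carr[OF x] by (auto simp: B.l_neg)
    thus "\<exists>y\<in>carrier (ideal_module A B f J). y \<oplus>\<^bsub>ideal_module A B f J\<^esub> x = \<zero>\<^bsub>ideal_module A B f J\<^esub>"
      by auto
  qed (auto simp: J_carr B.a_ac)
qed (auto simp: J_carr B.l_distr B.r_distr B.m_assoc intro: J.I_l_closed)

lemma MJ_neg: "j \<in> J \<Longrightarrow> \<ominus>\<^bsub>ideal_module A B f J\<^esub> j = \<ominus>\<^bsub>B\<^esub> j"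
proof -
  assume j: "j \<in> J"
  interpret MJ: module A "ideal_module A B f J" by (rule MJ_module)
  show ?thesis using j J_carr[OF j] by (intro MJ.minus_equality) (auto simp: B.l_neg)
qed

end

lemma lin_finsum:
  assumes M: "abelian_group M" and N: "abelian_group N"
    and Lc: "\<And>u. u \<in> carrier M \<Longrightarrow> L u \<in> carrier N"
    and La: "\<And>u v. u \<in> carrier M \<Longrightarrow> v \<in> carrier M \<Longrightarrow> L (u \<oplus>\<^bsub>M\<^esub> v) = L u \<oplus>\<^bsub>N\<^esub> L v"
    and L0: "L \<zero>\<^bsub>M\<^esub> = \<zero>\<^bsub>N\<^esub>"
    and fin: "finite T" and F: "F \<in> T \<rightarrow> carrier M"
  shows "L (finsum M F T) = finsum N (\<lambda>k. L (F k)) T"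
proof -
  interpret M: abelian_group M by fact
  interpret N: abelian_group N by fact
  show ?thesis using fin F
  proof (induct T rule: finite_induct)
    case empty
    show ?case using L0 by simp
  next
    case (insert a T)
    have Fa: "F a \<in> carrier M" and FT: "F \<in> T \<rightarrow> carrier M" using insert.prems by auto
    have "L (finsum M F (insert a T)) = L (F a \<oplus>\<^bsub>M\<^esub> finsum M F T)" using insert.hyps Fa FT by simp
    also have "\<dots> = L (F a) \<oplus>\<^bsub>N\<^esub> L (finsum M F T)" using La Fa M.finsum_closed[OF FT] by simp
    also have "\<dots> = L (F a) \<oplus>\<^bsub>N\<^esub> finsum N (\<lambda>k. L (F k)) T" using insert.hyps(3)[OF FT] by simp
    also have "\<dots> = finsum N (\<lambda>k. L (F k)) (insert a T)"
      using insert.hyps Lc Fa FT by (subst N.finsum_insert) (auto simp: Pi_def)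
    finally show ?case .
  qed
qed

lemma lin_neg:
  assumes M: "abelian_group M" and N: "abelian_group N"
    and Lc: "\<And>u. u \<in> carrier M \<Longrightarrow> L u \<in> carrier N"
    and La: "\<And>u v. u \<in> carrier M \<Longrightarrow> v \<in> carrier M \<Longrightarrow> L (u \<oplus>\<^bsub>M\<^esub> v) = L u \<oplus>\<^bsub>N\<^esub> L v"
    and L0: "L \<zero>\<^bsub>M\<^esub> = \<zero>\<^bsub>N\<^esub>" and u: "u \<in> carrier M"
  shows "L (\<ominus>\<^bsub>M\<^esub> u) = \<ominus>\<^bsub>N\<^esub> L u"
proof -
  interpret M: abelian_group M by fact
  interpret N: abelian_group N by fact
  have "L (\<ominus>\<^bsub>M\<^esub> u) \<oplus>\<^bsub>N\<^esub> L u = \<zero>\<^bsub>N\<^esub>" using La[of "\<ominus>\<^bsub>M\<^esub> u" u] u L0 by (simp add: M.l_neg)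
  moreover have "L (\<ominus>\<^bsub>M\<^esub> u) \<in> carrier N" using u Lc by simp
  moreover have "L u \<in> carrier N" using u Lc by simp
  ultimately show ?thesis by (metis N.minus_equality)
qed

lemma lin_dd:
  assumes M: "abelian_group M" and N: "abelian_group N"
    and Lc: "\<And>u. u \<in> carrier M \<Longrightarrow> L u \<in> carrier N"
    and La: "\<And>u v. u \<in> carrier M \<Longrightarrow> v \<in> carrier M \<Longrightarrow> L (u \<oplus>\<^bsub>M\<^esub> v) = L u \<oplus>\<^bsub>N\<^esub> L v"
    and L0: "L \<zero>\<^bsub>M\<^esub> = \<zero>\<^bsub>N\<^esub>" and fin: "finite T"
    and sc: "\<And>k m. k \<in> T \<Longrightarrow> m \<in> carrier M \<Longrightarrow> x k \<odot>\<^bsub>M\<^esub> m \<in> carrier M"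
    and sl: "\<And>k m. k \<in> T \<Longrightarrow> m \<in> carrier M \<Longrightarrow> L (x k \<odot>\<^bsub>M\<^esub> m) = x' k \<odot>\<^bsub>N\<^esub> L m"
    and pc: "\<And>k. k \<in> T \<Longrightarrow> \<phi> (T - {k}) \<in> carrier M"
  shows "L (dd R M x \<phi> T) = dd R' N x' (\<lambda>S. L (\<phi> S)) T"
proof -
  interpret M: abelian_group M by fact
  interpret N: abelian_group N by fact
  have pwc: "\<And>n v. v \<in> carrier M \<Longrightarrow> pw M n v \<in> carrier M" by (simp add: pw_def)
  have pwcN: "\<And>n v. v \<in> carrier N \<Longrightarrow> pw N n v \<in> carrier N" by (simp add: pw_def)
  have Lpw: "L (pw M n v) = pw N n (L v)" if v: "v \<in> carrier M" for n v
  proof (cases "even n")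
    case True thus ?thesis by (simp add: pw_def)
  next
    case False thus ?thesis using lin_neg[OF M N Lc La L0 v] by (simp add: pw_def)
  qed
  have tc: "(\<lambda>k. pw M (card {j \<in> T. j < k}) (x k \<odot>\<^bsub>M\<^esub> \<phi> (T - {k}))) \<in> T \<rightarrow> carrier M"
  proof
    fix k assume k: "k \<in> T"
    show "pw M (card {j \<in> T. j < k}) (x k \<odot>\<^bsub>M\<^esub> \<phi> (T - {k})) \<in> carrier M"
      by (rule pwc) (rule sc[OF k pc[OF k]])
  qed
  have "L (dd R M x \<phi> T) = finsum N (\<lambda>k. L (pw M (card {j \<in> T. j < k}) (x k \<odot>\<^bsub>M\<^esub> \<phi> (T - {k})))) T"
    unfolding dd_def by (rule lin_finsum[OF M N Lc La L0 fin tc])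
  also have "\<dots> = dd R' N x' (\<lambda>S. L (\<phi> S)) T"
    unfolding dd_def
  proof (rule N.finsum_cong')
    show "(\<lambda>k. pw N (card {j \<in> T. j < k}) (x' k \<odot>\<^bsub>N\<^esub> L (\<phi> (T - {k})))) \<in> T \<rightarrow> carrier N"
    proof
      fix k assume k: "k \<in> T"
      have "x' k \<odot>\<^bsub>N\<^esub> L (\<phi> (T - {k})) = L (x k \<odot>\<^bsub>M\<^esub> \<phi> (T - {k}))" using sl[OF k pc[OF k]] by simp
      also have "\<dots> \<in> carrier N" by (rule Lc) (rule sc[OF k pc[OF k]])
      finally show "pw N (card {j \<in> T. j < k}) (x' k \<odot>\<^bsub>N\<^esub> L (\<phi> (T - {k}))) \<in> carrier N"
        by (rule pwcN)
    qed
    fix k assume k: "k \<in> T"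
    show "L (pw M (card {j \<in> T. j < k}) (x k \<odot>\<^bsub>M\<^esub> \<phi> (T - {k}))) =
      pw N (card {j \<in> T. j < k}) (x' k \<odot>\<^bsub>N\<^esub> L (\<phi> (T - {k})))"
      using Lpw[OF sc[OF k pc[OF k]]] sl[OF k pc[OF k]] by simp
  qed simp
  finally show ?thesis .
qed

context amal
begin

abbreviation "MA \<equiv> ring_module A"
abbreviation "MJ \<equiv> ideal_module A B f J"
abbreviation "MAJ \<equiv> ring_module AJ"

definition p2 :: "'a \<times> 'b \<Rightarrow> 'b" where "p2 u = snd u \<ominus>\<^bsub>B\<^esub> f (fst u)"

lemma MA_module: "module A MA" by (rule cring_module_self[OF cA])
lemma MAJ_module: "module AJ MAJ" by (rule cring_module_self[OF AJ_cring])

lemma abMA: "abelian_group MA" using MA_module by (simp add: module_def)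
lemma abMJ: "abelian_group MJ" using MJ_module by (simp add: module_def)
lemma abMAJ: "abelian_group MAJ" using MAJ_module by (simp add: module_def)

lemma AJ_fst: "u \<in> carrier AJ \<Longrightarrow> fst u \<in> carrier A" by (simp add: AJ_carrier)
lemma AJ_snd: "u \<in> carrier AJ \<Longrightarrow> snd u \<in> carrier B" by (simp add: AJ_carrier)
lemma AJ_p2: "u \<in> carrier AJ \<Longrightarrow> p2 u \<in> J" by (simp add: AJ_carrier p2_def)

lemma iota_carr: "a \<in> carrier A \<Longrightarrow> (a, f a) \<in> carrier AJ"
  using sig_carrier[of a "\<zero>\<^bsub>B\<^esub>"] by simp

lemma AJ_eq:
  assumes "u \<in> carrier AJ" "v \<in> carrier AJ" "fst u = fst v" "p2 u = p2 v"
  shows "u = v"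
proof -
  have "snd u = p2 u \<oplus>\<^bsub>B\<^esub> f (fst u)" using assms(1) unfolding p2_def
    by (simp add: a_minus_def AJ_fst AJ_snd B.a_assoc B.l_neg)
  moreover have "snd v = p2 v \<oplus>\<^bsub>B\<^esub> f (fst v)" using assms(2) unfolding p2_def
    by (simp add: a_minus_def AJ_fst AJ_snd B.a_assoc B.l_neg)
  ultimately show ?thesis using assms by (simp add: prod_eq_iff)
qed

lemma sg_fst: "fst (a, f a \<oplus>\<^bsub>B\<^esub> j) = a" by simp
lemma sg_p2: "a \<in> carrier A \<Longrightarrow> j \<in> J \<Longrightarrow> p2 (a, f a \<oplus>\<^bsub>B\<^esub> j) = j"
  unfolding p2_def using J_carr by (simp add: a_minus_def B.a_ac B.r_neg B.r_neg2)

lemma p2_zero: "p2 \<zero>\<^bsub>AJ\<^esub> = \<zero>\<^bsub>B\<^esub>" by (simp add: p2_def)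

lemma p2_add: "u \<in> carrier AJ \<Longrightarrow> v \<in> carrier AJ \<Longrightarrow> p2 (u \<oplus>\<^bsub>AJ\<^esub> v) = p2 u \<oplus>\<^bsub>B\<^esub> p2 v"
  unfolding p2_def by (simp add: AJ_fst AJ_snd a_minus_def B.minus_add B.a_ac)

lemma p2_smult: "a \<in> carrier A \<Longrightarrow> u \<in> carrier AJ \<Longrightarrow> p2 ((a, f a) \<otimes>\<^bsub>AJ\<^esub> u) = f a \<otimes>\<^bsub>B\<^esub> p2 u"
  unfolding p2_def by (simp add: AJ_fst AJ_snd a_minus_def B.r_distr B.r_minus)

lemma dd_AJ_closed:
  assumes "\<And>k. k \<in> T \<Longrightarrow> x k \<in> carrier A" "\<And>k. k \<in> T \<Longrightarrow> \<phi> (T - {k}) \<in> carrier AJ"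
  shows "dd AJ MAJ (\<lambda>k. (x k, f (x k))) \<phi> T \<in> carrier AJ"
proof -
  interpret MAJ: module AJ MAJ by (rule MAJ_module)
  show ?thesis using MAJ.dd_closed[of T "\<lambda>k. (x k, f (x k))" \<phi>] assms iota_carr by simp
qed

lemma fst_dd:
  assumes fin: "finite T" and xc: "\<And>k. k \<in> T \<Longrightarrow> x k \<in> carrier A"
    and pc: "\<And>k. k \<in> T \<Longrightarrow> \<phi> (T - {k}) \<in> carrier AJ"
  shows "fst (dd AJ MAJ (\<lambda>k. (x k, f (x k))) \<phi> T) = dd A MA x (\<lambda>S. fst (\<phi> S)) T"
proof (rule lin_dd[OF abMAJ abMA])
  interpret AJ: cring AJ by (rule AJ_cring)
  show "(x k, f (x k)) \<odot>\<^bsub>MAJ\<^esub> m \<in> carrier MAJ" if k: "k \<in> T" and m: "m \<in> carrier MAJ" for k m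
  proof -
    have "(x k, f (x k)) \<otimes>\<^bsub>AJ\<^esub> m \<in> carrier AJ"
      using AJ.m_closed[OF iota_carr[OF xc[OF k]]] m by (simp only: ring_module_simps)
    thus ?thesis by (simp only: ring_module_simps)
  qed
qed (use fin xc pc in \<open>auto simp: AJ_fst\<close>)

lemma p2_dd:
  assumes fin: "finite T" and xc: "\<And>k. k \<in> T \<Longrightarrow> x k \<in> carrier A"
    and pc: "\<And>k. k \<in> T \<Longrightarrow> \<phi> (T - {k}) \<in> carrier AJ"
  shows "p2 (dd AJ MAJ (\<lambda>k. (x k, f (x k))) \<phi> T) = dd A MJ x (\<lambda>S. p2 (\<phi> S)) T"
proof (rule lin_dd[OF abMAJ abMJ])
  interpret AJ: cring AJ by (rule AJ_cring)
  show "(x k, f (x k)) \<odot>\<^bsub>MAJ\<^esub> m \<in> carrier MAJ" if k: "k \<in> T" and m: "m \<in> carrier MAJ" for k m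
  proof -
    have "(x k, f (x k)) \<otimes>\<^bsub>AJ\<^esub> m \<in> carrier AJ"
      using AJ.m_closed[OF iota_carr[OF xc[OF k]]] m by (simp only: ring_module_simps)
    thus ?thesis by (simp only: ring_module_simps)
  qed
  show "\<And>k m. k \<in> T \<Longrightarrow> m \<in> carrier MAJ \<Longrightarrow> p2 ((x k, f (x k)) \<odot>\<^bsub>MAJ\<^esub> m) = x k \<odot>\<^bsub>MJ\<^esub> p2 m"
    using xc p2_smult by simp
  show "p2 (u \<oplus>\<^bsub>MAJ\<^esub> v) = p2 u \<oplus>\<^bsub>MJ\<^esub> p2 v" if "u \<in> carrier MAJ" "v \<in> carrier MAJ" for u v
    using p2_add[of u v] that by (simp only: ring_module_simps MJ_simps)
  show "p2 \<zero>\<^bsub>MAJ\<^esub> = \<zero>\<^bsub>MJ\<^esub>" using p2_zero by (simp only: ring_module_simps MJ_simps)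
qed (use fin xc pc in \<open>auto simp: AJ_p2\<close>)

end

context amal
begin

lemma p2_iota: "a \<in> carrier A \<Longrightarrow> p2 (a, f a) = \<zero>\<^bsub>B\<^esub>"
  unfolding p2_def by (simp add: a_minus_def B.r_neg)

lemma p2_zfst: "j \<in> carrier B \<Longrightarrow> p2 (\<zero>\<^bsub>A\<^esub>, j) = j"
  unfolding p2_def by (simp add: a_minus_def B.minus_zero)

lemma nz_amalg:
  assumes fin: "finite I" and xc: "\<And>k. k \<in> I \<Longrightarrow> x k \<in> carrier A"
  shows "nz AJ MAJ I (\<lambda>k. (x k, f (x k))) i \<longleftrightarrow> (nz A MA I x i \<or> nz A MJ I x i)"
proof -
  interpret MA: module A MA by (rule MA_module)
  interpret MJm: module A MJ by (rule MJ_module)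
  interpret MAJ: module AJ MAJ by (rule MAJ_module)
  let ?X = "\<lambda>k. (x k, f (x k))"
  have chfst: "ch MA I j (\<lambda>S. fst (\<phi> S))" if "ch MAJ I j \<phi>" for j \<phi>
    using that by (auto simp: ch_def AJ_fst)
  have chp2: "ch MJ I j (\<lambda>S. p2 (\<phi> S))" if "ch MAJ I j \<phi>" for j \<phi>
    using that by (auto simp: ch_def AJ_p2)
  have chsg: "ch MAJ I j (\<lambda>S. (\<phi>1 S, f (\<phi>1 S) \<oplus>\<^bsub>B\<^esub> \<phi>2 S))" if "ch MA I j \<phi>1" "ch MJ I j \<phi>2" for j \<phi>1 \<phi>2
    using that by (auto simp: ch_def intro!: sig_carrier)
  have xS: "\<And>S k. S \<subseteq> I \<Longrightarrow> k \<in> S \<Longrightarrow> x k \<in> carrier A" using xc by auto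
  have fS: "\<And>S. S \<subseteq> I \<Longrightarrow> finite S" using fin finite_subset by blast
  have face: "\<And>\<psi> S k. ch MAJ I j \<psi> \<Longrightarrow> S \<subseteq> I \<Longrightarrow> card S = Suc j \<Longrightarrow> k \<in> S \<Longrightarrow> \<psi> (S - {k}) \<in> carrier AJ"
    for j using MAJ.ch_minus[OF fin] by simp
  have face1: "\<And>\<psi> S k. ch MAJ I (i - 1) \<psi> \<Longrightarrow> S \<subseteq> I \<Longrightarrow> card S = i \<Longrightarrow> k \<in> S \<Longrightarrow> \<psi> (S - {k}) \<in> carrier AJ"
    using MAJ.ch_minus1[OF fin] by simp
  show ?thesis
  proof
    assume "nz AJ MAJ I ?X i"
    then obtain \<phi> where cz: "cz AJ MAJ I ?X i \<phi>" and ncb: "\<not> cb AJ MAJ I ?X i \<phi>" by (auto simp: nz_def)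
    have chp: "ch MAJ I i \<phi>" using cz by (simp add: cz_def)
    have php: "\<And>S. S \<subseteq> I \<Longrightarrow> card S = i \<Longrightarrow> \<phi> S \<in> carrier AJ" using chp by (simp add: ch_def)
    have dz: "\<And>T. T \<subseteq> I \<Longrightarrow> card T = Suc i \<Longrightarrow> dd AJ MAJ ?X \<phi> T = \<zero>\<^bsub>AJ\<^esub>" using cz by (simp add: cz_def)
    have cz1: "cz A MA I x i (\<lambda>S. fst (\<phi> S))"
      unfolding cz_def
    proof (intro conjI allI impI chfst[OF chp])
      fix T assume T: "T \<subseteq> I \<and> card T = Suc i"
      have "dd A MA x (\<lambda>S. fst (\<phi> S)) T = fst (dd AJ MAJ ?X \<phi> T)"
        using fst_dd[of T x \<phi>] fS[of T] xS[of T] face[OF chp] T by simp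
      thus "dd A MA x (\<lambda>S. fst (\<phi> S)) T = \<zero>\<^bsub>MA\<^esub>" using dz T by simp
    qed
    have cz2: "cz A MJ I x i (\<lambda>S. p2 (\<phi> S))"
      unfolding cz_def
    proof (intro conjI allI impI chp2[OF chp])
      fix T assume T: "T \<subseteq> I \<and> card T = Suc i"
      have "dd A MJ x (\<lambda>S. p2 (\<phi> S)) T = p2 (dd AJ MAJ ?X \<phi> T)"
        using p2_dd[of T x \<phi>] fS[of T] xS[of T] face[OF chp] T by simp
      thus "dd A MJ x (\<lambda>S. p2 (\<phi> S)) T = \<zero>\<^bsub>MJ\<^esub>" using dz T p2_zero by simp
    qed
    show "nz A MA I x i \<or> nz A MJ I x i"
    proof (rule ccontr)
      assume "\<not> (nz A MA I x i \<or> nz A MJ I x i)"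
      hence cb1: "cb A MA I x i (\<lambda>S. fst (\<phi> S))" and cb2: "cb A MJ I x i (\<lambda>S. p2 (\<phi> S))"
        using cz1 cz2 by (auto simp: nz_def)
      obtain \<psi>1 where ch1: "ch MA I (i - 1) \<psi>1"
        and e1: "\<And>S. S \<subseteq> I \<Longrightarrow> card S = i \<Longrightarrow> fst (\<phi> S) = dd A MA x \<psi>1 S"
        using cb1 by (auto simp: cb_def)
      obtain \<psi>2 where ch2: "ch MJ I (i - 1) \<psi>2"
        and e2: "\<And>S. S \<subseteq> I \<Longrightarrow> card S = i \<Longrightarrow> p2 (\<phi> S) = dd A MJ x \<psi>2 S"
        using cb2 by (auto simp: cb_def)
      define \<psi> where "\<psi> = (\<lambda>S. (\<psi>1 S, f (\<psi>1 S) \<oplus>\<^bsub>B\<^esub> \<psi>2 S))"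
      have chps: "ch MAJ I (i - 1) \<psi>" unfolding \<psi>_def by (rule chsg[OF ch1 ch2])
      have "cb AJ MAJ I ?X i \<phi>"
        unfolding cb_def
      proof (intro exI[of _ \<psi>] conjI allI impI chps)
        fix S assume S: "S \<subseteq> I \<and> card S = i"
        have pS: "\<And>k. k \<in> S \<Longrightarrow> \<psi> (S - {k}) \<in> carrier AJ" using face1[OF chps] S by auto
        have p1S: "\<And>k. k \<in> S \<Longrightarrow> \<psi>1 (S - {k}) \<in> carrier A" using MA.ch_minus1[OF fin ch1] S by auto
        have p2S: "\<And>k. k \<in> S \<Longrightarrow> \<psi>2 (S - {k}) \<in> J" using MJm.ch_minus1[OF fin ch2] S by auto
        show "\<phi> S = dd AJ MAJ ?X \<psi> S"
        proof (rule AJ_eq)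
          show "\<phi> S \<in> carrier AJ" using php S by simp
          show "dd AJ MAJ ?X \<psi> S \<in> carrier AJ" using dd_AJ_closed[of S x \<psi>] xS[of S] pS S by simp
          have "fst (dd AJ MAJ ?X \<psi> S) = dd A MA x (\<lambda>S. fst (\<psi> S)) S"
            using fst_dd[of S x \<psi>] fS[of S] xS[of S] pS S by simp
          also have "\<dots> = dd A MA x \<psi>1 S" unfolding \<psi>_def by simp
          finally show "fst (\<phi> S) = fst (dd AJ MAJ ?X \<psi> S)" using e1 S by simp
          have "p2 (dd AJ MAJ ?X \<psi> S) = dd A MJ x (\<lambda>S. p2 (\<psi> S)) S"
            using p2_dd[of S x \<psi>] fS[of S] xS[of S] pS S by simp
          also have "\<dots> = dd A MJ x \<psi>2 S"
            using xS[of S] S p1S p2S by (intro MJm.dd_cong) (auto simp: \<psi>_def sg_p2 AJ_p2)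
          finally show "p2 (\<phi> S) = p2 (dd AJ MAJ ?X \<psi> S)" using e2 S by simp
        qed
      qed
      with ncb show False by simp
    qed
  next
    assume "nz A MA I x i \<or> nz A MJ I x i"
    thus "nz AJ MAJ I ?X i"
    proof
      assume "nz A MA I x i"
      then obtain \<phi>1 where cz1: "cz A MA I x i \<phi>1" and ncb1: "\<not> cb A MA I x i \<phi>1" by (auto simp: nz_def)
      have ch1: "ch MA I i \<phi>1" using cz1 by (simp add: cz_def)
      define \<phi> where "\<phi> = (\<lambda>S. (\<phi>1 S, f (\<phi>1 S) \<oplus>\<^bsub>B\<^esub> \<zero>\<^bsub>B\<^esub>))"
      have ch0: "ch MJ I i (\<lambda>S. \<zero>\<^bsub>B\<^esub>)" by (auto simp: ch_def)
      have chp: "ch MAJ I i \<phi>" unfolding \<phi>_def by (rule chsg[OF ch1 ch0])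
      have "cz AJ MAJ I ?X i \<phi>"
        unfolding cz_def
      proof (intro conjI allI impI chp)
        fix T assume T: "T \<subseteq> I \<and> card T = Suc i"
        have pT: "\<And>k. k \<in> T \<Longrightarrow> \<phi> (T - {k}) \<in> carrier AJ" using face[OF chp] T by auto
        have p1T: "\<And>k. k \<in> T \<Longrightarrow> \<phi>1 (T - {k}) \<in> carrier A" using MA.ch_minus[OF fin ch1] T by auto
        show "dd AJ MAJ ?X \<phi> T = \<zero>\<^bsub>MAJ\<^esub>"
        proof (simp only: ring_module_simps, rule AJ_eq)
          show "dd AJ MAJ ?X \<phi> T \<in> carrier AJ" using dd_AJ_closed[of T x \<phi>] xS[of T] pT T by simp
          show "\<zero>\<^bsub>AJ\<^esub> \<in> carrier AJ" using iota_carr[of "\<zero>\<^bsub>A\<^esub>"] by simp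
          have "fst (dd AJ MAJ ?X \<phi> T) = dd A MA x (\<lambda>S. fst (\<phi> S)) T"
            using fst_dd[of T x \<phi>] fS[of T] xS[of T] pT T by simp
          also have "\<dots> = dd A MA x \<phi>1 T" unfolding \<phi>_def by simp
          also have "\<dots> = \<zero>\<^bsub>A\<^esub>" using cz1 T by (simp add: cz_def)
          finally show "fst (dd AJ MAJ ?X \<phi> T) = fst \<zero>\<^bsub>AJ\<^esub>" by simp
          have "p2 (dd AJ MAJ ?X \<phi> T) = dd A MJ x (\<lambda>S. p2 (\<phi> S)) T"
            using p2_dd[of T x \<phi>] fS[of T] xS[of T] pT T by simp
          also have "\<dots> = dd A MJ x (\<lambda>S. \<zero>\<^bsub>MJ\<^esub>) T"
            using xS[of T] T p1T by (intro MJm.dd_cong) (auto simp: \<phi>_def p2_iota)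
          also have "\<dots> = \<zero>\<^bsub>MJ\<^esub>" using MJm.dd_zero[of T x] xS[of T] T by simp
          finally show "p2 (dd AJ MAJ ?X \<phi> T) = p2 \<zero>\<^bsub>AJ\<^esub>" using p2_zero by simp
        qed
      qed
      moreover have "\<not> cb AJ MAJ I ?X i \<phi>"
      proof
        assume "cb AJ MAJ I ?X i \<phi>"
        then obtain \<psi> where chps: "ch MAJ I (i - 1) \<psi>"
          and e: "\<And>S. S \<subseteq> I \<Longrightarrow> card S = i \<Longrightarrow> \<phi> S = dd AJ MAJ ?X \<psi> S" by (auto simp: cb_def)
        have "cb A MA I x i \<phi>1"
          unfolding cb_def
        proof (intro exI[of _ "\<lambda>S. fst (\<psi> S)"] conjI allI impI chfst[OF chps])
          fix S assume S: "S \<subseteq> I \<and> card S = i"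
          have pS: "\<And>k. k \<in> S \<Longrightarrow> \<psi> (S - {k}) \<in> carrier AJ" using face1[OF chps] S by auto
          have "\<phi>1 S = fst (\<phi> S)" unfolding \<phi>_def by simp
          also have "\<dots> = fst (dd AJ MAJ ?X \<psi> S)" using e S by simp
          also have "\<dots> = dd A MA x (\<lambda>S. fst (\<psi> S)) S"
            using fst_dd[of S x \<psi>] fS[of S] xS[of S] pS S by simp
          finally show "\<phi>1 S = dd A MA x (\<lambda>S. fst (\<psi> S)) S" .
        qed
        with ncb1 show False by simp
      qed
      ultimately show ?thesis by (auto simp: nz_def)
    next
      assume "nz A MJ I x i"
      then obtain \<phi>2 where cz2: "cz A MJ I x i \<phi>2" and ncb2: "\<not> cb A MJ I x i \<phi>2" by (auto simp: nz_def)
      have ch2: "ch MJ I i \<phi>2" using cz2 by (simp add: cz_def)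
      define \<phi> where "\<phi> = (\<lambda>S. (\<zero>\<^bsub>A\<^esub>, f \<zero>\<^bsub>A\<^esub> \<oplus>\<^bsub>B\<^esub> \<phi>2 S))"
      have ch0: "ch MA I i (\<lambda>S. \<zero>\<^bsub>A\<^esub>)" by (auto simp: ch_def)
      have chp: "ch MAJ I i \<phi>" unfolding \<phi>_def by (rule chsg[OF ch0 ch2])
      have "cz AJ MAJ I ?X i \<phi>"
        unfolding cz_def
      proof (intro conjI allI impI chp)
        fix T assume T: "T \<subseteq> I \<and> card T = Suc i"
        have pT: "\<And>k. k \<in> T \<Longrightarrow> \<phi> (T - {k}) \<in> carrier AJ" using face[OF chp] T by auto
        have p2T: "\<And>k. k \<in> T \<Longrightarrow> \<phi>2 (T - {k}) \<in> J" using MJm.ch_minus[OF fin ch2] T by auto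
        show "dd AJ MAJ ?X \<phi> T = \<zero>\<^bsub>MAJ\<^esub>"
        proof (simp only: ring_module_simps, rule AJ_eq)
          show "dd AJ MAJ ?X \<phi> T \<in> carrier AJ" using dd_AJ_closed[of T x \<phi>] xS[of T] pT T by simp
          show "\<zero>\<^bsub>AJ\<^esub> \<in> carrier AJ" using iota_carr[of "\<zero>\<^bsub>A\<^esub>"] by simp
          have "fst (dd AJ MAJ ?X \<phi> T) = dd A MA x (\<lambda>S. fst (\<phi> S)) T"
            using fst_dd[of T x \<phi>] fS[of T] xS[of T] pT T by simp
          also have "\<dots> = dd A MA x (\<lambda>S. \<zero>\<^bsub>MA\<^esub>) T" unfolding \<phi>_def by simp
          also have "\<dots> = \<zero>\<^bsub>MA\<^esub>" using MA.dd_zero[of T x] xS[of T] T by simp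
          finally show "fst (dd AJ MAJ ?X \<phi> T) = fst \<zero>\<^bsub>AJ\<^esub>" by simp
          have "p2 (dd AJ MAJ ?X \<phi> T) = dd A MJ x (\<lambda>S. p2 (\<phi> S)) T"
            using p2_dd[of T x \<phi>] fS[of T] xS[of T] pT T by simp
          also have "\<dots> = dd A MJ x \<phi>2 T"
            using xS[of T] T p2T J_carr by (intro MJm.dd_cong) (auto simp: \<phi>_def p2_zfst)
          also have "\<dots> = \<zero>\<^bsub>B\<^esub>" using cz2 T by (simp add: cz_def)
          finally show "p2 (dd AJ MAJ ?X \<phi> T) = p2 \<zero>\<^bsub>AJ\<^esub>" using p2_zero by simp
        qed
      qed
      moreover have "\<not> cb AJ MAJ I ?X i \<phi>"
      proof
        assume "cb AJ MAJ I ?X i \<phi>"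
        then obtain \<psi> where chps: "ch MAJ I (i - 1) \<psi>"
          and e: "\<And>S. S \<subseteq> I \<Longrightarrow> card S = i \<Longrightarrow> \<phi> S = dd AJ MAJ ?X \<psi> S" by (auto simp: cb_def)
        have "cb A MJ I x i \<phi>2"
          unfolding cb_def
        proof (intro exI[of _ "\<lambda>S. p2 (\<psi> S)"] conjI allI impI chp2[OF chps])
          fix S assume S: "S \<subseteq> I \<and> card S = i"
          have pS: "\<And>k. k \<in> S \<Longrightarrow> \<psi> (S - {k}) \<in> carrier AJ" using face1[OF chps] S by auto
          have "\<phi>2 S \<in> J" using ch2 S by (simp add: ch_def)
          hence "\<phi>2 S = p2 (\<phi> S)" unfolding \<phi>_def using J_carr by (simp add: p2_zfst)
          also have "\<dots> = p2 (dd AJ MAJ ?X \<psi> S)" using e S by simp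
          also have "\<dots> = dd A MJ x (\<lambda>S. p2 (\<psi> S)) S"
            using p2_dd[of S x \<psi>] fS[of S] xS[of S] pS S by simp
          finally show "\<phi>2 S = dd A MJ x (\<lambda>S. p2 (\<psi> S)) S" .
        qed
        with ncb2 show False by simp
      qed
      ultimately show ?thesis by (auto simp: nz_def)
    qed
  qed
qed

lemma gr_amalg:
  assumes fin: "finite I" and xc: "\<And>k. k \<in> I \<Longrightarrow> x k \<in> carrier A"
  shows "gr AJ MAJ I (\<lambda>k. (x k, f (x k))) = min (gr A MA I x) (gr A MJ I x)"
proof -
  have "nz AJ MAJ I (\<lambda>k. (x k, f (x k))) = (\<lambda>i. nz A MA I x i \<or> nz A MJ I x i)"
    by (rule ext) (rule nz_amalg[OF fin xc])
  thus ?thesis unfolding gr_def by (simp add: inf_enat_union)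
qed

end

lemma (in ring) genideal_mono':
  assumes "G0 \<subseteq> G1" "G1 \<subseteq> carrier R"
  shows "genideal R G0 \<subseteq> genideal R G1"
proof -
  have "G0 \<subseteq> genideal R G1" using genideal_self[OF assms(2)] assms(1) by (rule order_trans[rotated])
  thus ?thesis by (rule genideal_minimal[OF genideal_ideal[OF assms(2)]])
qed

lemma (in ring) genideal_finite_support:
  assumes Gs: "Gs \<subseteq> carrier R" and x: "x \<in> genideal R Gs"
  shows "\<exists>G0. G0 \<subseteq> Gs \<and> finite G0 \<and> x \<in> genideal R G0"
proof -
  define U where "U = {y. \<exists>G0. G0 \<subseteq> Gs \<and> finite G0 \<and> y \<in> genideal R G0}"
  have gi: "ideal (genideal R G0) R" if "G0 \<subseteq> Gs" for G0
  proof -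
    have "G0 \<subseteq> carrier R" using that Gs by (rule order_trans)
    thus ?thesis by (rule genideal_ideal)
  qed
  have Ucl: "a \<oplus> b \<in> U" if a: "a \<in> U" and b: "b \<in> U" for a b
  proof -
    obtain G0 where G0: "G0 \<subseteq> Gs" "finite G0" "a \<in> genideal R G0" using a unfolding U_def by blast
    obtain G1 where G1: "G1 \<subseteq> Gs" "finite G1" "b \<in> genideal R G1" using b unfolding U_def by blast
    have sub: "G0 \<union> G1 \<subseteq> Gs" using G0 G1 by simp
    have sc: "G0 \<union> G1 \<subseteq> carrier R" using sub Gs by (rule order_trans)
    have "a \<in> genideal R (G0 \<union> G1)" using genideal_mono'[of G0 "G0 \<union> G1", OF _ sc] G0 by blast
    moreover have "b \<in> genideal R (G0 \<union> G1)" using genideal_mono'[of G1 "G0 \<union> G1", OF _ sc] G1 by blast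
    ultimately have "a \<oplus> b \<in> genideal R (G0 \<union> G1)"
      by (rule additive_subgroup.a_closed[OF ideal.axioms(1)[OF gi[OF sub]]])
    thus ?thesis using G0 G1 sub unfolding U_def by blast
  qed
  have Uneg: "\<ominus> a \<in> U" if a: "a \<in> U" for a
  proof -
    obtain G0 where G0: "G0 \<subseteq> Gs" "finite G0" "a \<in> genideal R G0" using a unfolding U_def by blast
    have "\<ominus> a \<in> genideal R G0" by (rule additive_subgroup.a_inv_closed[OF ideal.axioms(1)[OF gi[OF G0(1)]] G0(3)])
    thus ?thesis using G0 unfolding U_def by blast
  qed
  have Umul: "r \<otimes> a \<in> U \<and> a \<otimes> r \<in> U" if a: "a \<in> U" and r: "r \<in> carrier R" for a r
  proof -
    obtain G0 where G0: "G0 \<subseteq> Gs" "finite G0" "a \<in> genideal R G0" using a unfolding U_def by blast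
    have "r \<otimes> a \<in> genideal R G0" by (rule ideal.I_l_closed[OF gi[OF G0(1)] G0(3) r])
    moreover have "a \<otimes> r \<in> genideal R G0" by (rule ideal.I_r_closed[OF gi[OF G0(1)] G0(3) r])
    ultimately show ?thesis using G0 unfolding U_def by blast
  qed
  have U0: "\<zero> \<in> U"
  proof -
    have "\<zero> \<in> genideal R {}" by (rule additive_subgroup.zero_closed[OF ideal.axioms(1)[OF gi]]) simp
    thus ?thesis unfolding U_def by blast
  qed
  have Uc: "U \<subseteq> carrier R"
  proof
    fix y assume "y \<in> U"
    then obtain G0 where G0: "G0 \<subseteq> Gs" "y \<in> genideal R G0" unfolding U_def by blast
    show "y \<in> carrier R" by (rule ideal.Icarr[OF gi[OF G0(1)] G0(2)])
  qed
  have "ideal U R"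
  proof (rule idealI)
    show "ring R" by (rule ring_axioms)
    show "subgroup U (add_monoid R)"
    proof (rule subgroup.intro)
      show "U \<subseteq> carrier (add_monoid R)" using Uc by simp
      show "\<And>x y. x \<in> U \<Longrightarrow> y \<in> U \<Longrightarrow> x \<otimes>\<^bsub>add_monoid R\<^esub> y \<in> U" using Ucl by simp
      show "\<one>\<^bsub>add_monoid R\<^esub> \<in> U" using U0 by simp
      show "\<And>x. x \<in> U \<Longrightarrow> inv\<^bsub>add_monoid R\<^esub> x \<in> U" using Uneg by (simp add: a_inv_def[symmetric])
    qed
    show "\<And>a x. a \<in> U \<Longrightarrow> x \<in> carrier R \<Longrightarrow> x \<otimes> a \<in> U" using Umul by blast
    show "\<And>a x. a \<in> U \<Longrightarrow> x \<in> carrier R \<Longrightarrow> a \<otimes> x \<in> U" using Umul by blast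
  qed
  moreover have "Gs \<subseteq> U"
  proof
    fix y assume y: "y \<in> Gs"
    hence "{y} \<subseteq> carrier R" using Gs by blast
    hence "y \<in> genideal R {y}" using genideal_self[of "{y}"] by blast
    thus "y \<in> U" using y unfolding U_def by blast
  qed
  ultimately have "genideal R Gs \<subseteq> U" by (rule genideal_minimal)
  thus ?thesis using x unfolding U_def by blast
qed

lemma (in ring) genideal_finite_support_set:
  assumes Gs: "Gs \<subseteq> carrier R" and T: "finite T" "T \<subseteq> genideal R Gs"
  shows "\<exists>G0. G0 \<subseteq> Gs \<and> finite G0 \<and> T \<subseteq> genideal R G0"
  using T
proof (induct T rule: finite_induct)
  case empty then show ?case by blast
next
  case (insert t T)
  obtain G0 where G0: "G0 \<subseteq> Gs" "finite G0" "T \<subseteq> genideal R G0" using insert by auto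
  obtain G1 where G1: "G1 \<subseteq> Gs" "finite G1" "t \<in> genideal R G1"
  proof -
    have "t \<in> genideal R Gs" using insert.prems by simp
    from genideal_finite_support[OF Gs this] show ?thesis using that by blast
  qed
  have sc: "G0 \<union> G1 \<subseteq> carrier R" using G0 G1 Gs by auto
  have "genideal R G0 \<subseteq> genideal R (G0 \<union> G1)" by (rule genideal_mono'[OF _ sc]) simp
  moreover have "genideal R G1 \<subseteq> genideal R (G0 \<union> G1)" by (rule genideal_mono'[OF _ sc]) simp
  ultimately have "insert t T \<subseteq> genideal R (G0 \<union> G1)" using G0 G1 by auto
  thus ?case using G0 G1 by (intro exI[of _ "G0 \<union> G1"]) auto
qed

context amal
begin

lemma ext_gen:
  assumes S: "S \<subseteq> carrier A"
  shows "genideal AJ ((\<lambda>a. (a, f a)) ` genideal A S) = genideal AJ ((\<lambda>a. (a, f a)) ` S)"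
proof -
  interpret AJ: cring AJ by (rule AJ_cring)
  interpret h: ring_hom_ring A AJ "\<lambda>a. (a, f a)"
    by (rule ring_hom_ringI2[OF A.ring_axioms AJ.ring_axioms iota_hom])
  have iS: "(\<lambda>a. (a, f a)) ` S \<subseteq> carrier AJ" using S iota_carr by auto
  have giS: "ideal (genideal AJ ((\<lambda>a. (a, f a)) ` S)) AJ" by (rule AJ.genideal_ideal[OF iS])
  have vi: "ideal {r \<in> carrier A. (r, f r) \<in> genideal AJ ((\<lambda>a. (a, f a)) ` S)} A"
    using h.ideal_vimage[OF giS] by simp
  have "S \<subseteq> {r \<in> carrier A. (r, f r) \<in> genideal AJ ((\<lambda>a. (a, f a)) ` S)}"
    using S AJ.genideal_self[OF iS] by auto
  hence "genideal A S \<subseteq> {r \<in> carrier A. (r, f r) \<in> genideal AJ ((\<lambda>a. (a, f a)) ` S)}"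
    by (rule A.genideal_minimal[OF vi])
  hence "(\<lambda>a. (a, f a)) ` genideal A S \<subseteq> genideal AJ ((\<lambda>a. (a, f a)) ` S)" by auto
  hence le: "genideal AJ ((\<lambda>a. (a, f a)) ` genideal A S) \<subseteq> genideal AJ ((\<lambda>a. (a, f a)) ` S)"
    by (rule AJ.genideal_minimal[OF giS])
  have gA: "genideal A S \<subseteq> carrier A" using ideal.Icarr[OF A.genideal_ideal[OF S]] by blast
  have "(\<lambda>a. (a, f a)) ` S \<subseteq> (\<lambda>a. (a, f a)) ` genideal A S" using A.genideal_self[OF S] by auto
  moreover have "(\<lambda>a. (a, f a)) ` genideal A S \<subseteq> carrier AJ" using gA iota_carr by auto
  ultimately have ge: "genideal AJ ((\<lambda>a. (a, f a)) ` S) \<subseteq> genideal AJ ((\<lambda>a. (a, f a)) ` genideal A S)"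
    by (rule AJ.genideal_mono')
  show ?thesis using le ge by blast
qed

lemma list_formula:
  assumes xs: "set xs \<subseteq> carrier A"
  shows "koszul_grade_seq AJ (map (\<lambda>a. (a, f a)) xs) MAJ =
    min (kgrade_fg A (genideal A (set xs)) MA) (kgrade_fg A (genideal A (set xs)) MJ)"
proof -
  interpret MA: module A MA by (rule MA_module)
  interpret MJm: module A MJ by (rule MJ_module)
  interpret MAJ: module AJ MAJ by (rule MAJ_module)
  have xc: "\<And>k. k \<in> {..<length xs} \<Longrightarrow> xs ! k \<in> carrier A" using xs by auto
  have "koszul_grade_seq AJ (map (\<lambda>a. (a, f a)) xs) MAJ =
      gr AJ MAJ {..<length xs} (\<lambda>k. map (\<lambda>a. (a, f a)) xs ! k)"
    using MAJ.kgs_gr by simp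
  also have "\<dots> = gr AJ MAJ {..<length xs} (\<lambda>k. (xs ! k, f (xs ! k)))"
    by (rule MAJ.gr_cong) (use xc iota_carr in auto)
  also have "\<dots> = min (gr A MA {..<length xs} (\<lambda>k. xs ! k)) (gr A MJ {..<length xs} (\<lambda>k. xs ! k))"
    by (rule gr_amalg) (use xc in auto)
  also have "gr A MA {..<length xs} (\<lambda>k. xs ! k) = kgrade_fg A (genideal A (set xs)) MA"
    using MA.kgrade_fg_eq[OF xs refl] MA.kgs_gr by simp
  also have "gr A MJ {..<length xs} (\<lambda>k. xs ! k) = kgrade_fg A (genideal A (set xs)) MJ"
    using MJm.kgrade_fg_eq[OF xs refl] MJm.kgs_gr by simp
  finally show ?thesis .
qed

lemma part1:
  assumes "fin_gen_ideal A b"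
  shows "kgrade_fg AJ (ext_ideal A B f J b) MAJ = min (kgrade_fg A b MA) (kgrade_fg A b MJ)"
proof -
  interpret MAJ: module AJ MAJ by (rule MAJ_module)
  obtain S where S: "finite S" "S \<subseteq> carrier A" "b = genideal A S"
    using assms by (auto simp: fin_gen_ideal_def)
  obtain xs where xs: "set xs = S" using finite_list[OF S(1)] by blast
  have ys: "set (map (\<lambda>a. (a, f a)) xs) \<subseteq> carrier AJ" using xs S iota_carr by auto
  have "genideal AJ (set (map (\<lambda>a. (a, f a)) xs)) = ext_ideal A B f J b"
    unfolding ext_ideal_def using ext_gen[OF S(2)] xs S(3) by simp
  hence "kgrade_fg AJ (ext_ideal A B f J b) MAJ = koszul_grade_seq AJ (map (\<lambda>a. (a, f a)) xs) MAJ"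
    using MAJ.kgrade_fg_eq[OF ys] by simp
  also have "\<dots> = min (kgrade_fg A b MA) (kgrade_fg A b MJ)"
    using list_formula[of xs] xs S by simp
  finally show ?thesis .
qed

lemma part2:
  assumes a: "ideal a A"
  shows "kgrade AJ (ext_ideal A B f J a) MAJ \<le> min (kgrade A a MA) (kgrade A a MJ)"
  unfolding kgrade_def[of AJ]
proof (rule SUP_least)
  interpret AJ: cring AJ by (rule AJ_cring)
  interpret MAJ: module AJ MAJ by (rule MAJ_module)
  fix c assume "c \<in> {c. c \<subseteq> ext_ideal A B f J a \<and> fin_gen_ideal AJ c}"
  hence c: "c \<subseteq> ext_ideal A B f J a" "fin_gen_ideal AJ c" by auto
  obtain T where T: "finite T" "T \<subseteq> carrier AJ" "c = genideal AJ T" using c(2) by (auto simp: fin_gen_ideal_def)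
  have ac: "a \<subseteq> carrier A" using ideal.Icarr[OF a] by blast
  have ia: "(\<lambda>x. (x, f x)) ` a \<subseteq> carrier AJ" using ac iota_carr by auto
  have "T \<subseteq> c" using AJ.genideal_self[OF T(2)] T(3) by simp
  hence "T \<subseteq> genideal AJ ((\<lambda>x. (x, f x)) ` a)" using c(1) unfolding ext_ideal_def by blast
  then obtain Y where Y: "Y \<subseteq> (\<lambda>x. (x, f x)) ` a" "finite Y" "T \<subseteq> genideal AJ Y"
    using AJ.genideal_finite_support_set[OF ia T(1)] by blast
  obtain S0 where S0: "S0 \<subseteq> a" "finite S0" "Y = (\<lambda>x. (x, f x)) ` S0"
    using finite_subset_image[OF Y(2) Y(1)] by blast
  have S0c: "S0 \<subseteq> carrier A" using S0 ac by auto
  obtain xs where xs: "set xs = S0" using finite_list[OF S0(2)] by blast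
  obtain ts where ts: "set ts = T" using finite_list[OF T(1)] by blast
  define b where "b = genideal A S0"
  have bfg: "fin_gen_ideal A b" unfolding b_def fin_gen_ideal_def using S0 S0c by blast
  have ba: "b \<subseteq> a" unfolding b_def by (rule A.genideal_minimal[OF a S0(1)])
  have ys: "set (map (\<lambda>x. (x, f x)) xs) \<subseteq> carrier AJ" using xs S0c iota_carr by auto
  have Yc: "Y \<subseteq> carrier AJ" using Y(1) ia by blast
  have "genideal AJ T \<subseteq> genideal AJ Y"
    by (rule AJ.genideal_minimal[OF AJ.genideal_ideal[OF Yc] Y(3)])
  hence sub: "genideal AJ (set ts) \<subseteq> genideal AJ (set (map (\<lambda>x. (x, f x)) xs))"
    using ts xs S0(3) by simp
  have "kgrade_fg AJ c MAJ = koszul_grade_seq AJ ts MAJ"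
    using MAJ.kgrade_fg_eq[of ts c] ts T by simp
  also have "\<dots> \<le> koszul_grade_seq AJ (map (\<lambda>x. (x, f x)) xs) MAJ"
    by (rule MAJ.kgs_le) (use ts T ys sub in auto)
  also have "\<dots> = min (kgrade_fg A b MA) (kgrade_fg A b MJ)"
    using list_formula[of xs] xs S0c unfolding b_def by simp
  also have "\<dots> \<le> min (kgrade A a MA) (kgrade A a MJ)"
  proof (rule min.mono)
    have "b \<in> {b. b \<subseteq> a \<and> fin_gen_ideal A b}" using ba bfg by simp
    thus "kgrade_fg A b MA \<le> kgrade A a MA" unfolding kgrade_def by (rule SUP_upper)
    show "kgrade_fg A b MJ \<le> kgrade A a MJ"
      unfolding kgrade_def using ba bfg by (intro SUP_upper) simp
  qed
  finally show "kgrade_fg AJ c MAJ \<le> min (kgrade A a MA) (kgrade A a MJ)" .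
qed

end

theorem lemma3p1:
  fixes A :: "'a ring" and B :: "'b ring" and f :: "'a \<Rightarrow> 'b" and J :: "'b set"
  assumes "cring A" and "cring B" and "f \<in> ring_hom A B" and "ideal J B"
  shows "(\<forall>\<bb>. fin_gen_ideal A \<bb> \<longrightarrow>
            kgrade_fg (amalg A B f J) (ext_ideal A B f J \<bb>) (ring_module (amalg A B f J))
              = min (kgrade_fg A \<bb> (ring_module A)) (kgrade_fg A \<bb> (ideal_module A B f J)))
       \<and> (\<forall>\<aa>. ideal \<aa> A \<longrightarrow>
            kgrade (amalg A B f J) (ext_ideal A B f J \<aa>) (ring_module (amalg A B f J))
              \<le> min (kgrade A \<aa> (ring_module A)) (kgrade A \<aa> (ideal_module A B f J)))"
proof -
  interpret amal A B f J using assms by (rule amal.intro)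
  show ?thesis using part1 part2 by blast
qed


end
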